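(* Let $T>0$, $\mathbb{U}\subset\mathbb{R}^m$ compact non-empty, and $f:[0,T]\times\mathbb{R}^n\times\mathbb{U}\to\mathbb{R}^n$ continuous, Lipschitz in $x$ uniformly in $(s,u)$, with $f(s,x,\mathbb{U})=\{f(s,x,u)\,|\,u\in\mathbb{U}\}$ convex for all $(s,x)\in[0,T]\times\mathbb{R}^n$. Let $g\in C(\mathbb{R}^n;\mathbb{R})$ be of class $\mathcal{Z}$ and let $v(t,x)=\inf_{u\in\mathcal{U}[t,T]}g(\varphi(T;t,x,u))$. Then for every $t\in[0,T]$ the map $x\mapsto v(t,x)$ is of class $\mathcal{Z}$.
   Context: $\mathcal{U}[t,T]$ is the set of measurable maps $u:[t,T]\to\mathbb{U}$, and $\varphi(\cdot;t,x,u)$ denotes the unique absolutely continuous solution of $\dot{x}(s)=f(s,x(s),u(s))$ for a.e. $s\in(t,T)$, $x(t)=x$. A function $z:\mathbb{R}^n\to\mathbb{R}$ is of class $\mathcal{Z}$ if for every $\bar{x}$ with $z(\bar{x})=0$ and every $r>0$ there exists $x$ with $\|x-\bar{x}\|<r$ and $z(x)<0$. *)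

theory Defs
  imports "HOL-Analysis.Analysis"
begin

definition classZ :: "('a::real_normed_vector \<Rightarrow> real) \<Rightarrow> bool" where
  "classZ z \<longleftrightarrow> (\<forall>xb. z xb = 0 \<longrightarrow> (\<forall>r>0. \<exists>x. norm (x - xb) < r \<and> z x < 0))"

definition abs_cont_on :: "real \<Rightarrow> real \<Rightarrow> (real \<Rightarrow> 'a::real_normed_vector) \<Rightarrow> bool" where
  "abs_cont_on a b y \<longleftrightarrow>
     (\<forall>\<epsilon>>0. \<exists>\<delta>>0. \<forall>(N::nat) (c::nat \<Rightarrow> real) (d::nat \<Rightarrow> real).
        (\<forall>k<N. a \<le> c k \<and> c k \<le> d k \<and> d k \<le> b) \<and>
        (\<forall>i<N. \<forall>j<N. i \<noteq> j \<longrightarrow> d i \<le> c j \<or> d j \<le> c i) \<and>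
        (\<Sum>k<N. d k - c k) < \<delta>
        \<longrightarrow> (\<Sum>k<N. norm (y (d k) - y (c k))) < \<epsilon>)"

definition controls :: "'m::euclidean_space set \<Rightarrow> real \<Rightarrow> real \<Rightarrow> (real \<Rightarrow> 'm) set" where
  "controls U t T = {u. u \<in> borel_measurable (lebesgue_on {t..T}) \<and> (\<forall>s\<in>{t..T}. u s \<in> U)}"

definition is_solution ::
  "(real \<Rightarrow> 'n::euclidean_space \<Rightarrow> 'm \<Rightarrow> 'n) \<Rightarrow> real \<Rightarrow> real \<Rightarrow> 'n \<Rightarrow> (real \<Rightarrow> 'm) \<Rightarrow> (real \<Rightarrow> 'n) \<Rightarrow> bool" where
  "is_solution f t T x u y \<longleftrightarrow>
     abs_cont_on t T y \<and> y t = x \<and>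
     (AE s in lebesgue. s \<in> {t<..<T} \<longrightarrow> (y has_vector_derivative f s (y s) (u s)) (at s))"

definition traj ::
  "(real \<Rightarrow> 'n::euclidean_space \<Rightarrow> 'm \<Rightarrow> 'n) \<Rightarrow> real \<Rightarrow> real \<Rightarrow> 'n \<Rightarrow> (real \<Rightarrow> 'm) \<Rightarrow> real \<Rightarrow> 'n" where
  "traj f t T x u = (THE y. is_solution f t T x u y \<and> (\<forall>s. s \<notin> {t..T} \<longrightarrow> y s = x))"

definition value_fun ::
  "(real \<Rightarrow> 'n::euclidean_space \<Rightarrow> 'm::euclidean_space \<Rightarrow> 'n) \<Rightarrow> 'm set \<Rightarrow> ('n \<Rightarrow> real) \<Rightarrow> real \<Rightarrow> real \<Rightarrow> 'n \<Rightarrow> real" where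
  "value_fun f U g T t x = (INF u\<in>controls U t T. g (traj f t T x u T))"

end

theory Submission
  imports Defs
begin

definition adm :: "real \<Rightarrow> real \<Rightarrow> nat \<Rightarrow> (nat \<Rightarrow> real) \<Rightarrow> (nat \<Rightarrow> real) \<Rightarrow> real \<Rightarrow> bool" where
  "adm a b N c d \<delta> \<longleftrightarrow> (\<forall>k<N. a \<le> c k \<and> c k \<le> d k \<and> d k \<le> b) \<and>
        (\<forall>i<N. \<forall>j<N. i \<noteq> j \<longrightarrow> d i \<le> c j \<or> d j \<le> c i) \<and>
        (\<Sum>k<N. d k - c k) < \<delta>"

lemma abs_cont_on_alt:
  "abs_cont_on a b y \<longleftrightarrow> (\<forall>e>0. \<exists>\<delta>>0. \<forall>N c d. adm a b N c d \<delta> \<longrightarrow> (\<Sum>k<N. norm (y (d k) - y (c k))) < e)"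
  unfolding abs_cont_on_def adm_def by blast

lemma abs_cont_onE:
  assumes "abs_cont_on a b y" "e > 0"
  obtains \<delta> where "\<delta> > 0" "\<And>N c d. adm a b N c d \<delta> \<Longrightarrow> (\<Sum>k<N. norm (y (d k) - y (c k))) < e"
  using assms unfolding abs_cont_on_alt by meson

lemma admD: "adm a b N c d \<delta> \<Longrightarrow> k < N \<Longrightarrow> a \<le> c k \<and> c k \<le> d k \<and> d k \<le> b"
  unfolding adm_def by blast

lemma adm_sum: "adm a b N c d \<delta> \<Longrightarrow> (\<Sum>k<N. d k - c k) < \<delta>"
  unfolding adm_def by blast

lemma ac_lipschitz:
  fixes y :: "real \<Rightarrow> 'a::real_normed_vector"
  assumes "\<And>s r. s \<in> {a..b} \<Longrightarrow> r \<in> {a..b} \<Longrightarrow> norm (y s - y r) \<le> M * \<bar>s - r\<bar>"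
  shows "abs_cont_on a b y"
  unfolding abs_cont_on_alt
proof (intro allI impI)
  fix e :: real assume e: "e > 0"
  define M' where "M' = max M 0 + 1"
  have M': "M' > 0" "M \<le> M'" by (auto simp: M'_def)
  show "\<exists>\<delta>>0. \<forall>N c d. adm a b N c d \<delta> \<longrightarrow> (\<Sum>k<N. norm (y (d k) - y (c k))) < e"
  proof (intro exI[of _ "e / M'"] conjI allI impI)
    show "e / M' > 0" using e M' by simp
    fix N c d assume H: "adm a b N c d (e / M')"
    have "(\<Sum>k<N. norm (y (d k) - y (c k))) \<le> (\<Sum>k<N. M' * (d k - c k))"
    proof (rule sum_mono)
      fix k assume "k \<in> {..<N}"
      then have k: "a \<le> c k" "c k \<le> d k" "d k \<le> b" using admD[OF H] by auto
      have "norm (y (d k) - y (c k)) \<le> M * \<bar>d k - c k\<bar>" using assms[of "d k" "c k"] k by auto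
      also have "\<dots> = M * (d k - c k)" using k by simp
      also have "\<dots> \<le> M' * (d k - c k)" using k M' by (intro mult_right_mono) auto
      finally show "norm (y (d k) - y (c k)) \<le> M' * (d k - c k)" .
    qed
    also have "\<dots> = M' * (\<Sum>k<N. d k - c k)" by (simp add: sum_distrib_left)
    also have "\<dots> < M' * (e / M')" using adm_sum[OF H] M' by (intro mult_strict_left_mono) auto
    also have "\<dots> = e" using M' by simp
    finally show "(\<Sum>k<N. norm (y (d k) - y (c k))) < e" .
  qed
qed

lemma ac_uniform:
  fixes y :: "real \<Rightarrow> 'a::real_normed_vector"
  assumes "abs_cont_on a b y" "e > 0"
  obtains \<delta> where "\<delta> > 0" "\<And>s r. s \<in> {a..b} \<Longrightarrow> r \<in> {a..b} \<Longrightarrow> \<bar>s - r\<bar> < \<delta> \<Longrightarrow> norm (y s - y r) < e"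
proof -
  obtain \<delta> where d: "\<delta> > 0" and H: "\<And>N c d. adm a b N c d \<delta> \<Longrightarrow> (\<Sum>k<N. norm (y (d k) - y (c k))) < e"
    using abs_cont_onE[OF assms] by blast
  show ?thesis
  proof (rule that[OF d])
    fix s r assume sr: "s \<in> {a..b}" "r \<in> {a..b}" "\<bar>s - r\<bar> < \<delta>"
    have "adm a b 1 (\<lambda>_. min s r) (\<lambda>_. max s r) \<delta>"
      using sr by (auto simp: adm_def)
    from H[OF this] have "norm (y (max s r) - y (min s r)) < e"
      by (simp add: lessThan_Suc)
    then show "norm (y s - y r) < e"
      by (cases "s \<le> r") (auto simp: norm_minus_commute max_def min_def)
  qed
qed

lemma ac_continuous:
  fixes y :: "real \<Rightarrow> 'a::real_normed_vector"
  assumes "abs_cont_on a b y"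
  shows "continuous_on {a..b} y"
  unfolding continuous_on_iff
proof (intro ballI allI impI)
  fix x e assume x: "x \<in> {a..b}" and e: "(e::real) > 0"
  obtain \<delta> where "\<delta> > 0" "\<And>s r. s \<in> {a..b} \<Longrightarrow> r \<in> {a..b} \<Longrightarrow> \<bar>s - r\<bar> < \<delta> \<Longrightarrow> norm (y s - y r) < e"
    using ac_uniform[OF assms e] by blast
  then show "\<exists>d>0. \<forall>x'\<in>{a..b}. dist x' x < d \<longrightarrow> dist (y x') (y x) < e"
    using x by (auto simp: dist_norm intro!: exI[of _ \<delta>])
qed

lemma ac_sub:
  assumes "abs_cont_on a b y" "a \<le> a'" "b' \<le> b"
  shows "abs_cont_on a' b' y"
proof -
  have "adm a' b' N c d \<delta> \<Longrightarrow> adm a b N c d \<delta>" for N c d \<delta>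
    using assms(2,3) unfolding adm_def by force
  then show ?thesis using assms(1) unfolding abs_cont_on_alt by meson
qed

lemma ac_comp:
  fixes y :: "real \<Rightarrow> 'a::real_normed_vector" and H :: "'a \<Rightarrow> 'b::real_normed_vector"
  assumes "abs_cont_on a b y"
    and "\<And>s r. s \<in> {a..b} \<Longrightarrow> r \<in> {a..b} \<Longrightarrow> norm (H (y s) - H (y r)) \<le> K * norm (y s - y r)"
  shows "abs_cont_on a b (\<lambda>s. H (y s))"
  unfolding abs_cont_on_alt
proof (intro allI impI)
  fix e :: real assume e: "e > 0"
  define K' where "K' = max K 0 + 1"
  have K': "K' > 0" "K \<le> K'" by (auto simp: K'_def)
  obtain \<delta> where d: "\<delta> > 0" and H: "\<And>N c d. adm a b N c d \<delta> \<Longrightarrow>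
          (\<Sum>k<N. norm (y (d k) - y (c k))) < e / K'"
    using abs_cont_onE[OF assms(1), of "e / K'"] e K' by auto
  show "\<exists>\<delta>>0. \<forall>N c d. adm a b N c d \<delta> \<longrightarrow> (\<Sum>k<N. norm (H (y (d k)) - H (y (c k)))) < e"
  proof (intro exI[of _ \<delta>] conjI allI impI)
    show "\<delta> > 0" by fact
    fix N c d assume A: "adm a b N c d \<delta>"
    have "(\<Sum>k<N. norm (H (y (d k)) - H (y (c k)))) \<le> (\<Sum>k<N. K' * norm (y (d k) - y (c k)))"
    proof (rule sum_mono)
      fix k assume "k \<in> {..<N}"
      then have "a \<le> c k \<and> c k \<le> d k \<and> d k \<le> b" using admD[OF A] by auto
      then have k: "d k \<in> {a..b}" "c k \<in> {a..b}" by auto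
      have "norm (H (y (d k)) - H (y (c k))) \<le> K * norm (y (d k) - y (c k))" using assms(2) k by auto
      also have "\<dots> \<le> K' * norm (y (d k) - y (c k))" using K' by (intro mult_right_mono) auto
      finally show "norm (H (y (d k)) - H (y (c k))) \<le> K' * norm (y (d k) - y (c k))" .
    qed
    also have "\<dots> = K' * (\<Sum>k<N. norm (y (d k) - y (c k)))" by (simp add: sum_distrib_left)
    also have "\<dots> < K' * (e / K')" using H[OF A] K' by (intro mult_strict_left_mono) auto
    also have "\<dots> = e" using K' by simp
    finally show "(\<Sum>k<N. norm (H (y (d k)) - H (y (c k)))) < e" .
  qed
qed

lemma ac_diff:
  fixes y z :: "real \<Rightarrow> 'a::real_normed_vector"
  assumes "abs_cont_on a b y" "abs_cont_on a b z"
  shows "abs_cont_on a b (\<lambda>s. y s - z s)"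
  unfolding abs_cont_on_alt
proof (intro allI impI)
  fix e :: real assume e: "e > 0"
  obtain \<delta>1 where d1: "\<delta>1 > 0" and H1: "\<And>N c d. adm a b N c d \<delta>1 \<Longrightarrow>
          (\<Sum>k<N. norm (y (d k) - y (c k))) < e / 2"
    using abs_cont_onE[OF assms(1), of "e/2"] e by auto
  obtain \<delta>2 where d2: "\<delta>2 > 0" and H2: "\<And>N c d. adm a b N c d \<delta>2 \<Longrightarrow>
          (\<Sum>k<N. norm (z (d k) - z (c k))) < e / 2"
    using abs_cont_onE[OF assms(2), of "e/2"] e by auto
  show "\<exists>\<delta>>0. \<forall>N c d. adm a b N c d \<delta> \<longrightarrow>
          (\<Sum>k<N. norm ((y (d k) - z (d k)) - (y (c k) - z (c k)))) < e"
  proof (intro exI[of _ "min \<delta>1 \<delta>2"] conjI allI impI)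
    show "min \<delta>1 \<delta>2 > 0" using d1 d2 by simp
    fix N c d assume A: "adm a b N c d (min \<delta>1 \<delta>2)"
    have A1: "adm a b N c d \<delta>1" and A2: "adm a b N c d \<delta>2" using A unfolding adm_def by auto
    have "(\<Sum>k<N. norm ((y (d k) - z (d k)) - (y (c k) - z (c k)))) \<le>
          (\<Sum>k<N. norm (y (d k) - y (c k)) + norm (z (d k) - z (c k)))"
      by (rule sum_mono) (metis (no_types, lifting) add_diff_eq diff_add_eq diff_diff_eq2 norm_triangle_ineq4)
    also have "\<dots> = (\<Sum>k<N. norm (y (d k) - y (c k))) + (\<Sum>k<N. norm (z (d k) - z (c k)))"
      by (simp add: sum.distrib)
    also have "\<dots> < e/2 + e/2" using H1[OF A1] H2[OF A2] by (intro add_strict_mono) auto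
    finally show "(\<Sum>k<N. norm ((y (d k) - z (d k)) - (y (c k) - z (c k)))) < e" by simp
  qed
qed

lemma disj_intervals:
  fixes l1 h1 l2 h2 :: real
  assumes "{l1<..<h1} \<inter> {l2<..<h2} = {}" "l1 < h1" "a1 \<le> l1" "h1 \<le> b1" "l2 < h2" "a2 \<le> l2" "h2 \<le> b2"
  shows "h1 \<le> l2 \<or> h2 \<le> l1"
proof (rule ccontr)
  assume "\<not> ?thesis"
  then have "(max l1 l2 + min h1 h2)/2 \<in> {l1<..<h1} \<inter> {l2<..<h2}" using assms(2,5) by auto
  then show False using assms(1) by blast
qed

lemma ac_lusin:
  fixes \<phi> :: "real \<Rightarrow> real"
  assumes ac: "abs_cont_on a b \<phi>" and N: "negligible N" "N \<subseteq> {a..b}"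
  shows "negligible (\<phi> ` N)"
proof (cases "a < b")
  case False
  then have "N \<subseteq> {a}" using N(2) by auto
  then have "finite (\<phi> ` N)" using finite_subset by auto
  then show ?thesis by (rule negligible_finite)
next
  case ab: True
  have cont: "continuous_on {a..b} \<phi>" by (rule ac_continuous[OF ac])
  show ?thesis
    unfolding negligible_outer_le
  proof (intro allI impI)
    fix e :: real assume e: "e > 0"
    obtain \<delta> where d: "\<delta> > 0" and H: "\<And>N c d. adm a b N c d \<delta> \<Longrightarrow> (\<Sum>k<N. norm (\<phi> (d k) - \<phi> (c k))) < e"
      using abs_cont_onE[OF ac e] by blast
    have Nm: "N \<in> lmeasurable" "measure lebesgue N = 0"
      using N(1) negligible_imp_measurable negligible_imp_measure0 by auto
    have Ncb: "N \<subseteq> cbox a b" using N(2) by (simp add: cbox_interval)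
    obtain \<D> where Dc: "countable \<D>"
      and DK: "\<And>K. K \<in> \<D> \<Longrightarrow> K \<subseteq> cbox a b \<and> K \<noteq> {} \<and> (\<exists>c d. K = cbox c d)"
      and Dpw: "pairwise (\<lambda>A B. interior A \<inter> interior B = {}) \<D>"
      and Dint: "\<And>K. \<lbrakk>K \<in> \<D>; box a b \<noteq> {}\<rbrakk> \<Longrightarrow> interior K \<noteq> {}"
      and Dcov: "N \<subseteq> \<Union>\<D>" and Dm: "\<Union>\<D> \<in> lmeasurable"
      and Dmeas: "measure lebesgue (\<Union>\<D>) \<le> measure lebesgue N + \<delta>/2"
      using measurable_outer_intervals_bounded[OF Nm(1) Ncb half_gt_zero[OF d]] by metis
    have boxab: "box a b \<noteq> {}" using ab by auto
    define lo where "lo K = (SOME c. \<exists>d. K = {c..d})" for K :: "real set"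
    define hi where "hi K = (SOME d. K = {lo K..d})" for K :: "real set"
    have Kform: "{lo K..hi K} = K \<and> lo K < hi K \<and> a \<le> lo K \<and> hi K \<le> b" if KD: "K \<in> \<D>" for K
    proof -
      obtain c d where cd: "K = {c..d}" using DK[OF KD] by (auto simp: cbox_interval)
      have "\<exists>d. K = {lo K..d}" unfolding lo_def using someI_ex[of "\<lambda>c. \<exists>d. K = {c..d}"] cd by blast
      then have e1: "K = {lo K..hi K}" unfolding hi_def by (rule someI_ex)
      have "interior K \<noteq> {}" using Dint[OF KD boxab] .
      then have "interior {lo K..hi K} \<noteq> {}" using e1 by metis
      then have lt: "lo K < hi K" by (metis greaterThanLessThan_empty_iff interior_atLeastAtMost_real not_less)
      have "K \<subseteq> {a..b}" using DK[OF KD] by (auto simp: cbox_interval)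
      then have "{lo K..hi K} \<subseteq> {a..b}" using e1 by metis
      then have "a \<le> lo K \<and> hi K \<le> b" using lt by auto
      then show ?thesis using e1 lt by metis
    qed
    have Kmem: "s \<in> K \<longleftrightarrow> lo K \<le> s \<and> s \<le> hi K" if "K \<in> \<D>" for K s
      using Kform[OF that] by (metis atLeastAtMost_iff)
    have Klm: "K \<in> lmeasurable" if KD: "K \<in> \<D>" for K
    proof -
      have e: "{lo K..hi K} = K" using Kform[OF KD] by blast
      have "cbox (lo K) (hi K) \<in> lmeasurable" by (rule lmeasurable_cbox)
      then have "{lo K..hi K} \<in> lmeasurable" by (simp only: cbox_interval)
      then show ?thesis unfolding e .
    qed
    have Kb: "lo K < hi K" "a \<le> lo K" "hi K \<le> b" if "K \<in> \<D>" for K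
      using Kform[OF that] by blast+
    have Kmeas: "measure lebesgue K = hi K - lo K" if "K \<in> \<D>" for K
    proof -
      have "measure lebesgue {lo K..hi K} = hi K - lo K" using Kb[OF that] by simp
      then show ?thesis using Kform[OF that] by metis
    qed

    have ex_min: "\<exists>p\<in>K. \<forall>s\<in>K. \<phi> p \<le> \<phi> s" if "K \<in> \<D>" for K
    proof -
      have e: "{lo K..hi K} = K" using Kform[OF that] by blast
      have "{lo K..hi K} \<subseteq> {a..b}" "compact {lo K..hi K}" "{lo K..hi K} \<noteq> {}" using Kb[OF that] by auto
      then have "K \<subseteq> {a..b}" "compact K" "K \<noteq> {}" unfolding e .
      then show ?thesis using continuous_attains_inf[of K \<phi>] continuous_on_subset[OF cont] by blast
    qed
    have ex_max: "\<exists>q\<in>K. \<forall>s\<in>K. \<phi> s \<le> \<phi> q" if "K \<in> \<D>" for K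
    proof -
      have e: "{lo K..hi K} = K" using Kform[OF that] by blast
      have "{lo K..hi K} \<subseteq> {a..b}" "compact {lo K..hi K}" "{lo K..hi K} \<noteq> {}" using Kb[OF that] by auto
      then have "K \<subseteq> {a..b}" "compact K" "K \<noteq> {}" unfolding e .
      then show ?thesis using continuous_attains_sup[of K \<phi>] continuous_on_subset[OF cont] by blast
    qed
    define p where "p K = (SOME p. p \<in> K \<and> (\<forall>s\<in>K. \<phi> p \<le> \<phi> s))" for K
    define q where "q K = (SOME q. q \<in> K \<and> (\<forall>s\<in>K. \<phi> s \<le> \<phi> q))" for K
    have pq: "p K \<in> K \<and> (\<forall>s\<in>K. \<phi> (p K) \<le> \<phi> s) \<and> q K \<in> K \<and> (\<forall>s\<in>K. \<phi> s \<le> \<phi> (q K))" if "K \<in> \<D>" for K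
    proof -
      have "p K \<in> K \<and> (\<forall>s\<in>K. \<phi> (p K) \<le> \<phi> s)" unfolding p_def using ex_min[OF that] by (rule someI_ex[OF bexE]) auto
      moreover have "q K \<in> K \<and> (\<forall>s\<in>K. \<phi> s \<le> \<phi> (q K))" unfolding q_def using ex_max[OF that] by (rule someI_ex[OF bexE]) auto
      ultimately show ?thesis by blast
    qed
    define A where "A K = {\<phi> (p K)..\<phi> (q K)}" for K
    have cover: "\<phi> ` N \<subseteq> (\<Union>K\<in>\<D>. A K)"
    proof
      fix z assume "z \<in> \<phi> ` N"
      then obtain s where s: "s \<in> N" "z = \<phi> s" by auto
      then obtain K where "K \<in> \<D>" "s \<in> K" using Dcov by auto
      then show "z \<in> (\<Union>K\<in>\<D>. A K)" using pq[of K] s by (auto simp: A_def)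
    qed
    have Am: "A K \<in> lmeasurable" for K unfolding A_def by simp
    have bound: "measure lebesgue (\<Union>K\<in>F. A K) \<le> e" if F: "F \<subseteq> \<D>" "finite F" for F
    proof -
      have "measure lebesgue (\<Union>K\<in>F. A K) \<le> (\<Sum>K\<in>F. measure lebesgue (A K))"
        by (rule measure_UNION_le) (use F Am in auto)
      also have "\<dots> = (\<Sum>K\<in>F. \<phi> (q K) - \<phi> (p K))"
        by (rule sum.cong) (use pq F in \<open>auto simp: A_def\<close>)
      also have "\<dots> \<le> e"
      proof -
        obtain h where h: "bij_betw h {0..<card F} F" using ex_bij_betw_nat_finite[OF F(2)] by blast
        define c where "c k = min (p (h k)) (q (h k))" for k
        define d' where "d' k = max (p (h k)) (q (h k))" for k
        have hF: "h k \<in> F" if "k < card F" for k using h that by (auto simp: bij_betw_def)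
        have sub: "c k \<in> h k \<and> d' k \<in> h k" if "k < card F" for k
          using pq[of "h k"] hF[OF that] F by (auto simp: c_def d'_def min_def max_def)
        have sumeq: "(\<Sum>k<card F. norm (\<phi> (d' k) - \<phi> (c k))) = (\<Sum>K\<in>F. \<phi> (q K) - \<phi> (p K))"
        proof -
          have "(\<Sum>k<card F. norm (\<phi> (d' k) - \<phi> (c k))) = (\<Sum>k\<in>{0..<card F}. \<phi> (q (h k)) - \<phi> (p (h k)))"
          proof (rule sum.cong)
            fix k assume "k \<in> {0..<card F}"
            then have "h k \<in> \<D>" using hF F by auto
            then have "\<phi> (p (h k)) \<le> \<phi> (q (h k))" using pq by blast
            then show "norm (\<phi> (d' k) - \<phi> (c k)) = \<phi> (q (h k)) - \<phi> (p (h k))"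
              by (auto simp: c_def d'_def min_def max_def)
          qed auto
          also have "\<dots> = (\<Sum>K\<in>F. \<phi> (q K) - \<phi> (p K))"
            using sum.reindex_bij_betw[OF h, of "\<lambda>K. \<phi> (q K) - \<phi> (p K)"] by simp
          finally show ?thesis .
        qed
        have "adm a b (card F) c d' \<delta>"
          unfolding adm_def
        proof (intro conjI allI impI)
          fix k assume k: "k < card F"
          have "h k \<in> \<D>" using hF[OF k] F by auto
          then show "a \<le> c k" "c k \<le> d' k" "d' k \<le> b"
            using Kmem[of "h k"] Kb[of "h k"] sub[OF k] by (auto simp: c_def d'_def)
        next
          fix i j assume ij: "i < card F" "j < card F" "i \<noteq> j"
          have hij: "h i \<noteq> h j" using h ij by (auto simp: bij_betw_def inj_on_def)
          have D: "h i \<in> \<D>" "h j \<in> \<D>" using hF ij F by auto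
          have "interior (h i) \<inter> interior (h j) = {}" using Dpw D hij by (auto simp: pairwise_def)
          then have "{lo (h i)<..<hi (h i)} \<inter> {lo (h j)<..<hi (h j)} = {}"
            using Kform[OF D(1)] Kform[OF D(2)] by (metis interior_atLeastAtMost_real)
          then have "hi (h i) \<le> lo (h j) \<or> hi (h j) \<le> lo (h i)"
            using Kb[OF D(1)] Kb[OF D(2)] by (rule disj_intervals)
          then show "d' i \<le> c j \<or> d' j \<le> c i"
            using sub[OF ij(1)] sub[OF ij(2)] Kmem[OF D(1)] Kmem[OF D(2)] by (smt (verit))
        next
          have "(\<Sum>k<card F. d' k - c k) \<le> (\<Sum>k<card F. measure lebesgue (h k))"
          proof (rule sum_mono)
            fix k assume "k \<in> {..<card F}"
            then have k: "k < card F" by auto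
            have "h k \<in> \<D>" using hF[OF k] F by auto
            then show "d' k - c k \<le> measure lebesgue (h k)"
              using Kmem[of "h k"] Kmeas[of "h k"] sub[OF k] by (auto simp: c_def d'_def)
          qed
          also have "\<dots> = (\<Sum>K\<in>F. measure lebesgue K)"
            using sum.reindex_bij_betw[OF h, of "measure lebesgue"] by (simp add: atLeast0LessThan)
          also have "\<dots> = measure lebesgue (\<Union>F)"
          proof (rule measure_negligible_finite_Union[symmetric])
            show "finite F" by fact
            show "S \<in> lmeasurable" if "S \<in> F" for S using Klm that F by blast
            show "pairwise (\<lambda>S T. negligible (S \<inter> T)) F"
              unfolding pairwise_def
            proof (intro ballI impI)
              fix S T assume ST: "S \<in> F" "T \<in> F" "S \<noteq> T"
              then have D: "S \<in> \<D>" "T \<in> \<D>" using F by auto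
              have "interior S \<inter> interior T = {}" using Dpw D ST by (auto simp: pairwise_def)
              then have dj: "{lo S<..<hi S} \<inter> {lo T<..<hi T} = {}"
                using Kform[OF D(1)] Kform[OF D(2)] by (metis interior_atLeastAtMost_real)
              have "S \<inter> T \<subseteq> {lo S, hi S, lo T, hi T}"
              proof
                fix x assume "x \<in> S \<inter> T"
                then have "lo S \<le> x" "x \<le> hi S" "lo T \<le> x" "x \<le> hi T" using Kmem[OF D(1)] Kmem[OF D(2)] by auto
                then show "x \<in> {lo S, hi S, lo T, hi T}" using dj by (auto simp: less_le)
              qed
              then show "negligible (S \<inter> T)" by (rule negligible_subset[rotated]) auto
            qed
          qed
          also have "\<dots> \<le> measure lebesgue (\<Union>\<D>)"
          proof (rule measure_mono_fmeasurable)
            show "\<Union>F \<subseteq> \<Union>\<D>" using F by auto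
            show "\<Union>\<D> \<in> lmeasurable" by fact
            have "\<And>S. S \<in> F \<Longrightarrow> S \<in> sets lebesgue" using F Klm by (auto intro: fmeasurableD)
            then show "\<Union>F \<in> sets lebesgue" using F(2) by (intro sets.finite_Union) auto
          qed
          also have "\<dots> < \<delta>" using Dmeas Nm d by simp
          finally show "(\<Sum>k<card F. d' k - c k) < \<delta>" .
        qed
        from H[OF this] sumeq show ?thesis by simp
      qed
      finally show ?thesis .
    qed
    have "(\<Union>K\<in>\<D>. A K) \<in> lmeasurable" "measure lebesgue (\<Union>K\<in>\<D>. A K) \<le> e"
      using fmeasurable_UN_bound[OF Dc, of A lebesgue e] measure_UN_bound[OF Dc, of A lebesgue e] Am bound by auto
    then show "\<exists>T. \<phi> ` N \<subseteq> T \<and> T \<in> lmeasurable \<and> measure lebesgue T \<le> e"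
      using cover by blast
  qed
qed

lemma deriv_lnsq:
  fixes z :: "real \<Rightarrow> 'a::real_inner"
  assumes d: "(z has_vector_derivative z') (at s)" and e: "(e::real) > 0"
  shows "((\<lambda>s. ln (e + z s \<bullet> z s)) has_real_derivative (2 * (z s \<bullet> z')) / (e + z s \<bullet> z s)) (at s)"
proof -
  have d': "(z has_derivative (\<lambda>h. h *\<^sub>R z')) (at s)" using d by (simp add: has_vector_derivative_def)
  have "((\<lambda>s. z s \<bullet> z s) has_derivative (\<lambda>h. z s \<bullet> (h *\<^sub>R z') + (h *\<^sub>R z') \<bullet> z s)) (at s)"
    by (rule has_derivative_inner[OF d' d'])
  moreover have "(\<lambda>h. z s \<bullet> (h *\<^sub>R z') + (h *\<^sub>R z') \<bullet> z s) = (*) (2 * (z s \<bullet> z'))"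
    by (auto simp: fun_eq_iff inner_commute algebra_simps)
  ultimately have g0: "((\<lambda>s. z s \<bullet> z s) has_field_derivative 2 * (z s \<bullet> z')) (at s)"
    by (simp add: has_field_derivative_def)
  have g: "((\<lambda>s. e + z s \<bullet> z s) has_field_derivative 2 * (z s \<bullet> z')) (at s)"
    using DERIV_add[OF DERIV_const[of e] g0] by simp
  have pos: "e + z s \<bullet> z s > 0" using e by (simp add: add_pos_nonneg)
  have "((\<lambda>x. ln (e + z x \<bullet> z x)) has_field_derivative (1 / (e + z s \<bullet> z s)) * (2 * (z s \<bullet> z'))) (at s)"
    by (rule DERIV_chain2[OF DERIV_ln_divide[OF pos] g])
  then show ?thesis by simp
qed

lemma ac_mono_deriv:
  fixes \<phi> :: "real \<Rightarrow> real"
  assumes ac: "abs_cont_on a b \<phi>" and ab: "a \<le> b"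
    and der: "AE s in lebesgue. s \<in> {a<..<b} \<longrightarrow> (\<exists>D. (\<phi> has_real_derivative D) (at s) \<and> D \<le> K)"
  shows "\<phi> b - \<phi> a \<le> K * (b - a)"
proof -
  obtain N0 where N0: "{s \<in> space lebesgue. \<not> (s \<in> {a<..<b} \<longrightarrow> (\<exists>D. (\<phi> has_real_derivative D) (at s) \<and> D \<le> K))} \<subseteq> N0"
    "emeasure lebesgue N0 = 0" "N0 \<in> sets lebesgue"
    using AE_E[OF der] by blast
  define N where "N = (N0 \<inter> {a..b}) \<union> {a, b}"
  have negN0: "negligible N0" using N0(2,3) by (simp add: negligible_iff_null_sets null_sets_def)
  have negN: "negligible N" unfolding N_def
    by (rule negligible_Un) (auto intro: negligible_subset[OF negN0])
  have NN: "N \<subseteq> {a..b}" using ab unfolding N_def by auto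
  have good: "\<exists>D. (\<phi> has_real_derivative D) (at s) \<and> D \<le> K" if "s \<in> {a..b}" "s \<notin> N" for s
  proof -
    have s: "a < s" "s < b" "s \<notin> N0" using that unfolding N_def by auto
    show ?thesis
    proof (rule ccontr)
      assume "\<not> ?thesis"
      then have "s \<in> {s \<in> space lebesgue. \<not> (s \<in> {a<..<b} \<longrightarrow> (\<exists>D. (\<phi> has_real_derivative D) (at s) \<and> D \<le> K))}"
        using s by auto
      then show False using N0(1) s by blast
    qed
  qed
  have main: "\<phi> b - \<phi> a \<le> (K + \<eta>) * (b - a)" if \<eta>: "\<eta> > 0" for \<eta>
  proof -
    define \<psi> where "\<psi> s = \<phi> s - (K + \<eta>) * s" for s
    have aclin: "abs_cont_on a b (\<lambda>s. (K + \<eta>) * s)"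
      by (rule ac_lipschitz[where M="\<bar>K + \<eta>\<bar>"]) (simp add: right_diff_distrib[symmetric] abs_mult)
    have acpsi: "abs_cont_on a b \<psi>" unfolding \<psi>_def by (rule ac_diff[OF ac aclin])
    have contpsi: "continuous_on {a..b} \<psi>" by (rule ac_continuous[OF acpsi])
    have "\<psi> b \<le> \<psi> a"
    proof (rule ccontr)
      assume "\<not> \<psi> b \<le> \<psi> a"
      then have lt: "\<psi> a < \<psi> b" by simp
      have sub: "{\<psi> a<..<\<psi> b} \<subseteq> \<psi> ` N"
      proof
        fix c assume c: "c \<in> {\<psi> a<..<\<psi> b}"
        define S where "S = {s \<in> {a..b}. \<psi> s = c}"
        have Scl: "closed S" unfolding S_def by (rule continuous_closed_preimage_constant[OF contpsi]) simp
        have Sne: "S \<noteq> {}" using IVT'[of \<psi> a c b, OF _ _ ab contpsi] c unfolding S_def by auto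
        have Sbd: "bdd_above S" unfolding S_def by (rule bdd_aboveI[of _ b]) auto
        define sc where "sc = Sup S"
        have scS: "sc \<in> S" unfolding sc_def by (rule closed_contains_Sup[OF Sne Sbd Scl])
        then have sc: "sc \<in> {a..b}" "\<psi> sc = c" unfolding S_def by auto
        have scb: "sc < b" using sc c by (metis atLeastAtMost_iff greaterThanLessThan_iff less_eq_real_def less_irrefl)
        have sca: "a < sc" using sc c by (metis atLeastAtMost_iff greaterThanLessThan_iff less_eq_real_def less_irrefl)
        have above: "\<psi> r > c" if r: "sc < r" "r \<le> b" for r
        proof (rule ccontr)
          assume "\<not> \<psi> r > c"
          then have "\<psi> r \<le> c" by simp
          moreover have "c \<le> \<psi> b" using c by simp
          moreover have "continuous_on {r..b} \<psi>" using contpsi sc r by (auto intro: continuous_on_subset)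
          ultimately obtain x where x: "r \<le> x" "x \<le> b" "\<psi> x = c" using IVT'[of \<psi> r c b] r by auto
          then have "x \<in> S" using sc r unfolding S_def by auto
          then have "x \<le> sc" unfolding sc_def by (rule cSup_upper[OF _ Sbd])
          then show False using x r by simp
        qed
        have "sc \<in> N"
        proof (rule ccontr)
          assume "sc \<notin> N"
          then obtain D where D: "(\<phi> has_real_derivative D) (at sc)" "D \<le> K" using good sc by blast
          have "(\<psi> has_real_derivative D - (K + \<eta>)) (at sc)"
            unfolding \<psi>_def using DERIV_diff[OF D(1) DERIV_cmult[OF DERIV_ident, of "K + \<eta>"]] by simp
          moreover have "D - (K + \<eta>) < 0" using D \<eta> by simp
          ultimately obtain d where d: "d > 0" "\<And>h. h > 0 \<Longrightarrow> h < d \<Longrightarrow> \<psi> sc > \<psi> (sc + h)"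
            using DERIV_neg_dec_right by blast
          define h where "h = min (d/2) (b - sc)"
          have h: "h > 0" "h < d" "sc + h \<le> b" using d scb unfolding h_def by auto
          have "\<psi> (sc + h) > c" using above[of "sc + h"] h by simp
          moreover have "\<psi> sc > \<psi> (sc + h)" using d(2) h by simp
          ultimately show False using sc by simp
        qed
        then show "c \<in> \<psi> ` N" using sc by auto
      qed
      have "negligible (\<psi> ` N)" by (rule ac_lusin[OF acpsi negN NN])
      then have "negligible {\<psi> a<..<\<psi> b}" using sub by (rule negligible_subset)
      then show False using lt negligible_interval(2)[of "\<psi> a" "\<psi> b"] by simp
    qed
    then show ?thesis unfolding \<psi>_def by (simp add: algebra_simps)
  qed
  show ?thesis
  proof (cases "a = b")
    case True then show ?thesis by simp
  next
    case False
    then have ba: "b - a > 0" using ab by simp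
    show ?thesis
    proof (rule field_le_epsilon)
      fix e :: real assume e: "e > 0"
      have "\<phi> b - \<phi> a \<le> (K + e / (b - a)) * (b - a)" using main[of "e / (b - a)"] e ba by simp
      also have "\<dots> = K * (b - a) + e" using ba by (simp add: distrib_right)
      finally show "\<phi> b - \<phi> a \<le> K * (b - a) + e" .
    qed
  qed
qed

lemma ln_lip:
  fixes x y e :: real
  assumes "e > 0" "x \<ge> e" "y \<ge> e"
  shows "\<bar>ln x - ln y\<bar> \<le> \<bar>x - y\<bar> / e"
proof -
  have gen: "ln u - ln v \<le> \<bar>u - v\<bar> / e" if "u \<ge> e" "v \<ge> e" for u v
  proof -
    have "ln u - ln v = ln (u / v)" using that assms(1) by (simp add: ln_div)
    also have "\<dots> \<le> u / v - 1" using that assms(1) by (intro ln_le_minus_one) simp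
    also have "\<dots> = (u - v) / v" using that assms(1) by (simp add: field_simps)
    also have "\<dots> \<le> \<bar>u - v\<bar> / v" using that assms(1) by (intro divide_right_mono) auto
    also have "\<dots> \<le> \<bar>u - v\<bar> / e" using that assms(1) by (intro divide_left_mono) auto
    finally show ?thesis .
  qed
  show ?thesis using gen[of x y] gen[of y x] assms by (simp add: abs_le_iff abs_minus_commute)
qed

lemma log_estimate:
  fixes z :: "real \<Rightarrow> 'a::euclidean_space"
  assumes ac: "abs_cont_on p q z" and pq: "p \<le> q" and e: "e > 0"
    and der: "AE s in lebesgue. s \<in> {p<..<q} \<longrightarrow>
        (\<exists>z'. (z has_vector_derivative z') (at s) \<and> \<bar>2 * (z s \<bullet> z')\<bar> \<le> K * (e + z s \<bullet> z s))"
  shows "\<bar>ln (e + z q \<bullet> z q) - ln (e + z p \<bullet> z p)\<bar> \<le> K * (q - p)"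
proof -
  have cont: "continuous_on {p..q} z" by (rule ac_continuous[OF ac])
  have "compact (z ` {p..q})" by (rule compact_continuous_image[OF cont compact_Icc])
  then obtain R where R: "\<And>s. s \<in> {p..q} \<Longrightarrow> norm (z s) \<le> R"
    by (meson compact_imp_bounded bounded_iff imageI)
  define H where "H w = ln (e + w \<bullet> w)" for w :: 'a
  have Hlip: "norm (H (z s) - H (z r)) \<le> (2 * R / e) * norm (z s - z r)" if "s \<in> {p..q}" "r \<in> {p..q}" for s r
  proof -
    have "norm (H (z s) - H (z r)) \<le> \<bar>(e + z s \<bullet> z s) - (e + z r \<bullet> z r)\<bar> / e"
      unfolding H_def real_norm_def by (rule ln_lip[OF e]) auto
    also have "(e + z s \<bullet> z s) - (e + z r \<bullet> z r) = (z s - z r) \<bullet> (z s + z r)"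
      by (simp add: algebra_simps inner_commute)
    also have "\<bar>(z s - z r) \<bullet> (z s + z r)\<bar> \<le> norm (z s - z r) * norm (z s + z r)"
      by (rule Cauchy_Schwarz_ineq2)
    also have "norm (z s + z r) \<le> 2 * R" using R[OF that(1)] R[OF that(2)] norm_triangle_ineq[of "z s" "z r"] by simp
    then have "norm (z s - z r) * norm (z s + z r) \<le> norm (z s - z r) * (2 * R)" by (intro mult_left_mono) auto
    finally show ?thesis using e by (simp add: divide_right_mono field_simps)
  qed
  have acphi: "abs_cont_on p q (\<lambda>s. H (z s))" by (rule ac_comp[OF ac Hlip])
  have acmphi: "abs_cont_on p q (\<lambda>s. - H (z s))"
    by (rule ac_comp[OF ac, of "\<lambda>w. - H w" "2 * R / e"]) (use Hlip in \<open>simp add: norm_minus_commute abs_minus_commute\<close>)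
  have d: "((\<lambda>s. H (z s)) has_real_derivative (2 * (z s \<bullet> z')) / (e + z s \<bullet> z s)) (at s)"
    if "(z has_vector_derivative z') (at s)" for s z' unfolding H_def by (rule deriv_lnsq[OF that e])
  have pos: "e + z s \<bullet> z s > 0" for s using e by (simp add: add_pos_nonneg)
  have 1: "H (z q) - H (z p) \<le> K * (q - p)"
  proof (rule ac_mono_deriv[OF acphi pq])
    show "AE s in lebesgue. s \<in> {p<..<q} \<longrightarrow> (\<exists>D. ((\<lambda>s. H (z s)) has_real_derivative D) (at s) \<and> D \<le> K)"
    proof (rule eventually_mono[OF der], intro impI)
      fix s assume "s \<in> {p<..<q} \<longrightarrow> (\<exists>z'. (z has_vector_derivative z') (at s) \<and> \<bar>2 * (z s \<bullet> z')\<bar> \<le> K * (e + z s \<bullet> z s))" "s \<in> {p<..<q}"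
      then obtain z' where z': "(z has_vector_derivative z') (at s)" "\<bar>2 * (z s \<bullet> z')\<bar> \<le> K * (e + z s \<bullet> z s)" by blast
      have "2 * (z s \<bullet> z') / (e + z s \<bullet> z s) \<le> K" using z'(2) pos[of s] by (simp add: divide_le_eq abs_le_iff)
      then show "\<exists>D. ((\<lambda>s. H (z s)) has_real_derivative D) (at s) \<and> D \<le> K" using d[OF z'(1)] by blast
    qed
  qed
  have 2: "- H (z q) - - H (z p) \<le> K * (q - p)"
  proof (rule ac_mono_deriv[OF acmphi pq])
    show "AE s in lebesgue. s \<in> {p<..<q} \<longrightarrow> (\<exists>D. ((\<lambda>s. - H (z s)) has_real_derivative D) (at s) \<and> D \<le> K)"
    proof (rule eventually_mono[OF der], intro impI)
      fix s assume "s \<in> {p<..<q} \<longrightarrow> (\<exists>z'. (z has_vector_derivative z') (at s) \<and> \<bar>2 * (z s \<bullet> z')\<bar> \<le> K * (e + z s \<bullet> z s))" "s \<in> {p<..<q}"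
      then obtain z' where z': "(z has_vector_derivative z') (at s)" "\<bar>2 * (z s \<bullet> z')\<bar> \<le> K * (e + z s \<bullet> z s)" by blast
      have "(- (2 * (z s \<bullet> z'))) / (e + z s \<bullet> z s) \<le> K" using z'(2) pos[of s] by (subst pos_divide_le_eq) (auto simp: abs_le_iff)
      then have "- (2 * (z s \<bullet> z') / (e + z s \<bullet> z s)) \<le> K" by (metis minus_divide_left)
      then show "\<exists>D. ((\<lambda>s. - H (z s)) has_real_derivative D) (at s) \<and> D \<le> K" using DERIV_minus[OF d[OF z'(1)]] by blast
    qed
  qed
  show ?thesis using 1 2 unfolding H_def by (simp add: abs_le_iff)
qed

lemma measure_cball_real: "d \<ge> 0 \<Longrightarrow> measure lebesgue (cball (x::real) d) = 2 * d"
  by (simp add: cball_eq_atLeastAtMost)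

lemma density_negligible:
  fixes A :: "real set"
  assumes A: "A \<in> sets lebesgue" and ep: "\<epsilon> > 0"
  shows "negligible {x\<in>A. \<forall>\<delta>>0. \<exists>d. 0 < d \<and> d < \<delta> \<and> \<epsilon> * d < measure lebesgue (cball x d - A)}"
    (is "negligible ?S")
  unfolding negligible_outer_le
proof (intro allI impI)
  fix e :: real assume e: "e > 0"
  obtain G where G: "open G" "A \<subseteq> G" "G - A \<in> lmeasurable" "emeasure lebesgue (G - A) < ennreal (\<epsilon> * e / 4)"
    using sets_lebesgue_outer_open[OF A, of "\<epsilon> * e / 4"] e ep by auto
  have mGA: "measure lebesgue (G - A) < \<epsilon> * e / 4"
    using G(3,4) e ep by (simp add: emeasure_eq_measure2 ennreal_less_iff)
  define K where "K = {(x, d). x \<in> ?S \<and> 0 < d \<and> cball x d \<subseteq> G \<and> \<epsilon> * d < measure lebesgue (cball x d - A)}"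
  have rpos: "\<And>i. i \<in> K \<Longrightarrow> 0 < snd i" unfolding K_def by auto
  have cov: "\<exists>i. i \<in> K \<and> x \<in> cball (fst i) (snd i) \<and> snd i < d" if x: "x \<in> ?S" and d: "0 < d" for x d
  proof -
    obtain \<rho> where \<rho>: "\<rho> > 0" "cball x \<rho> \<subseteq> G" using G(1,2) x open_contains_cball by blast
    have H: "\<forall>\<delta>>0. \<exists>d. 0 < d \<and> d < \<delta> \<and> \<epsilon> * d < measure lebesgue (cball x d - A)" using x by blast
    obtain d' where d': "0 < d'" "d' < min d \<rho>" "\<epsilon> * d' < measure lebesgue (cball x d' - A)"
      using H[rule_format, of "min d \<rho>"] d \<rho> by auto
    have "cball x d' \<subseteq> cball x \<rho>" using d' by (intro subset_cball) auto
    then have "cball x d' \<subseteq> G" using \<rho> by blast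
    then have "(x, d') \<in> K" unfolding K_def using x d' by auto
    then show ?thesis using d' by (intro exI[of _ "(x, d')"]) auto
  qed
  obtain C where C: "countable C" "C \<subseteq> K"
    and pw: "pairwise (\<lambda>i j. disjnt (cball (fst i) (snd i)) (cball (fst j) (snd j))) C"
    and neg: "negligible (?S - (\<Union>i\<in>C. cball (fst i) (snd i)))"
    by (rule Vitali_covering_theorem_cballs[of K snd ?S fst, OF rpos cov]) blast+
  define B where "B i = cball (fst i) (snd i)" for i :: "real \<times> real"
  have Bm: "B i \<in> lmeasurable" for i unfolding B_def by simp
  have BA: "B i - A \<in> lmeasurable" for i using Bm A by (rule fmeasurable_Diff)
  have iK: "0 < snd i \<and> B i \<subseteq> G \<and> \<epsilon> * snd i < measure lebesgue (B i - A)" if "i \<in> C" for i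
  proof -
    have "i \<in> K" using that C(2) by blast
    then show ?thesis unfolding K_def B_def by (cases i) simp
  qed
  have bound: "measure lebesgue (\<Union>i\<in>F. B i) \<le> e / 2" if F: "F \<subseteq> C" "finite F" for F
  proof -
    have pwF: "pairwise (\<lambda>i j. negligible (B i \<inter> B j)) F"
      using pairwise_subset[OF pw F(1)] unfolding pairwise_def disjnt_def B_def by auto
    have pwF': "pairwise (\<lambda>i j. negligible ((B i - A) \<inter> (B j - A))) F"
      unfolding pairwise_def
    proof (intro ballI impI)
      fix i j assume "i \<in> F" "j \<in> F" "i \<noteq> j"
      then have "B i \<inter> B j = {}" using pairwise_subset[OF pw F(1)] unfolding pairwise_def disjnt_def B_def by blast
      then have "(B i - A) \<inter> (B j - A) = {}" by blast
      then show "negligible ((B i - A) \<inter> (B j - A))" by simp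
    qed
    have "measure lebesgue (\<Union>i\<in>F. B i) = (\<Sum>i\<in>F. measure lebesgue (B i))"
      by (rule measure_negligible_finite_Union_image[OF F(2) _ pwF]) (rule Bm)
    also have "\<dots> = (\<Sum>i\<in>F. 2 * snd i)"
    proof (rule sum.cong)
      fix i assume "i \<in> F"
      then have "i \<in> C" using F by blast
      then have "0 \<le> snd i" using iK[of i] by (simp add: less_imp_le)
      then show "measure lebesgue (B i) = 2 * snd i" unfolding B_def by (rule measure_cball_real)
    qed simp
    also have "\<dots> \<le> (\<Sum>i\<in>F. (2 / \<epsilon>) * measure lebesgue (B i - A))"
    proof (rule sum_mono)
      fix i assume "i \<in> F"
      then have "i \<in> C" using F by blast
      then have "\<epsilon> * snd i < measure lebesgue (B i - A)" using iK[of i] by blast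
      then show "2 * snd i \<le> (2 / \<epsilon>) * measure lebesgue (B i - A)" using ep by (simp add: field_simps)
    qed
    also have "\<dots> = (2 / \<epsilon>) * measure lebesgue (\<Union>i\<in>F. B i - A)"
      using measure_negligible_finite_Union_image[OF F(2) BA pwF'] by (simp only: sum_distrib_left)
    also have "\<dots> \<le> (2 / \<epsilon>) * measure lebesgue (G - A)"
    proof (intro mult_left_mono measure_mono_fmeasurable)
      have "B i \<subseteq> G" if "i \<in> F" for i using iK[of i] that F by blast
      then show "(\<Union>i\<in>F. B i - A) \<subseteq> G - A" by blast
      show "(\<Union>i\<in>F. B i - A) \<in> sets lebesgue" using BA F(2) by (intro sets.finite_UN) (auto intro: fmeasurableD)
    qed (use G ep in auto)
    also have "\<dots> \<le> (2 / \<epsilon>) * (\<epsilon> * e / 4)" using mGA ep by (intro mult_left_mono) auto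
    also have "\<dots> = e / 2" using ep by simp
    finally show ?thesis .
  qed
  have Um: "(\<Union>i\<in>C. B i) \<in> lmeasurable" and Umeas: "measure lebesgue (\<Union>i\<in>C. B i) \<le> e / 2"
    using fmeasurable_UN_bound[OF C(1), of B lebesgue "e/2"] measure_UN_bound[OF C(1), of B lebesgue "e/2"] Bm bound by auto
  define T where "T = (?S - (\<Union>i\<in>C. B i)) \<union> (\<Union>i\<in>C. B i)"
  have negm: "?S - (\<Union>i\<in>C. B i) \<in> lmeasurable" "measure lebesgue (?S - (\<Union>i\<in>C. B i)) = 0"
    using neg unfolding B_def by (auto intro: negligible_imp_measurable negligible_imp_measure0)
  have "T \<in> lmeasurable" unfolding T_def by (rule fmeasurable.Un[OF negm(1) Um])
  moreover have "measure lebesgue T \<le> e"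
  proof -
    have "measure lebesgue T \<le> measure lebesgue (?S - (\<Union>i\<in>C. B i)) + measure lebesgue (\<Union>i\<in>C. B i)"
      unfolding T_def using negm Um by (intro measure_Un_le) (auto intro: fmeasurableD)
    then show ?thesis using negm Umeas e by simp
  qed
  moreover have "?S \<subseteq> T" unfolding T_def by auto
  ultimately show "\<exists>T. ?S \<subseteq> T \<and> T \<in> lmeasurable \<and> measure lebesgue T \<le> e" by blast
qed

lemma integral_split_diff:
  fixes h :: "real \<Rightarrow> 'a::euclidean_space"
  assumes hint: "h integrable_on {a..b}" and x: "x \<in> {a..b}" and y: "y \<in> {a..b}"
  shows "norm (integral {a..y} h - integral {a..x} h - (y - x) *\<^sub>R h x)
       = norm (integral {min x y..max x y} (\<lambda>s. h s - h x))"
proof -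
  have int: "h integrable_on {c..d}" if "a \<le> c" "d \<le> b" for c d
    using integrable_on_subinterval[OF hint] that by auto
  have cst: "(\<lambda>s. h x) integrable_on {c..d}" for c d :: real by (rule integrable_const_ivl)
  show ?thesis
  proof (cases "x \<le> y")
    case True
    have "integral {a..x} h + integral {x..y} h = integral {a..y} h"
      by (rule Henstock_Kurzweil_Integration.integral_combine) (use x y True int in auto)
    then have e1: "integral {a..y} h - integral {a..x} h = integral {x..y} h" by (metis add_diff_cancel_left')
    have e2: "integral {x..y} (\<lambda>s. h s - h x) = integral {x..y} h - (y - x) *\<^sub>R h x"
      using True x y by (subst integral_diff[OF int cst]) (auto simp: integral_const_real)
    show ?thesis using True by (simp add: e1 e2)
  next
    case False
    have "integral {a..y} h + integral {y..x} h = integral {a..x} h"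
      by (rule Henstock_Kurzweil_Integration.integral_combine) (use x y False int in auto)
    then have e1: "integral {a..y} h - integral {a..x} h = - integral {y..x} h" by (metis add_diff_cancel_left' minus_diff_eq)
    have e2: "integral {y..x} (\<lambda>s. h s - h x) = integral {y..x} h - (x - y) *\<^sub>R h x"
      using False x y by (subst integral_diff[OF int cst]) (auto simp: integral_const_real)
    have "integral {a..y} h - integral {a..x} h - (y - x) *\<^sub>R h x = - integral {y..x} (\<lambda>s. h s - h x)"
      by (simp add: e1 e2 algebra_simps)
    then show ?thesis using False by (simp add: min_def max_def)
  qed
qed

lemma aux_arith: "(2 / (n::real)) * r + 2 * M * ((1 / n) * r) = ((2 + 2 * M) / n) * r"
  by (simp add: add_divide_distrib distrib_right)

lemma lebesgue_diff:
  fixes h :: "real \<Rightarrow> 'a::euclidean_space"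
  assumes hm: "h \<in> borel_measurable (lebesgue_on {a..b})" and hb: "\<And>s. s \<in> {a..b} \<Longrightarrow> norm (h s) \<le> M"
  shows "AE x in lebesgue. x \<in> {a<..<b} \<longrightarrow> ((\<lambda>s. integral {a..s} h) has_vector_derivative h x) (at x)"
proof -
  have "cbox a b \<in> lmeasurable" by (rule lmeasurable_cbox)
  then have Iab_sets: "{a..b} \<in> sets lebesgue" by (simp add: cbox_interval fmeasurableD)
  have "h absolutely_integrable_on {a..b}"
    by (rule measurable_bounded_by_integrable_imp_absolutely_integrable[OF hm Iab_sets integrable_const_ivl hb])
  then have hint: "h integrable_on {a..b}" by (rule set_lebesgue_integral_eq_integral(1))
  obtain D :: "'a set" where D: "countable D" "UNIV \<subseteq> closure D"
    by (rule separable[of "UNIV :: 'a set"])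
  define A where "A q k = {s\<in>{a..b}. norm (h s - q) < 1 / Suc k}" for q k
  have Am: "A q k \<in> sets lebesgue" for q k
  proof -
    have "\<forall>T. T \<in> sets borel \<longrightarrow> {x \<in> {a..b}. h x \<in> T} \<in> sets lebesgue"
      using hm borel_measurable_lebesgue_on_preimage_borel[OF Iab_sets] by blast
    moreover have "ball q (1 / Suc k) \<in> sets borel" by (rule borel_open) simp
    ultimately have "{x \<in> {a..b}. h x \<in> ball q (1 / Suc k)} \<in> sets lebesgue" by blast
    moreover have "{x \<in> {a..b}. h x \<in> ball q (1 / Suc k)} = A q k"
      unfolding A_def by (auto simp: dist_norm norm_minus_commute)
    ultimately show ?thesis by simp
  qed
  define Bad where "Bad q k = {x\<in>A q k. \<forall>\<delta>>0. \<exists>d. 0 < d \<and> d < \<delta> \<and> (1 / Suc k) * d < measure lebesgue (cball x d - A q k)}" for q k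
  have negBad: "negligible (Bad q k)" for q k
    unfolding Bad_def by (rule density_negligible[OF Am]) simp
  define BadU where "BadU = \<Union>((\<lambda>(q, k). Bad q k) ` (D \<times> (UNIV :: nat set)))"
  have negU: "negligible BadU"
    unfolding BadU_def
  proof (rule negligible_countable_Union)
    have "countable (D \<times> (UNIV :: nat set))" using D(1) by (simp add: countable_SIGMA)
    then show "countable ((\<lambda>(q, k). Bad q k) ` (D \<times> (UNIV :: nat set)))" by (rule countable_image)
  qed (use negBad in auto)
  have key: "((\<lambda>s. integral {a..s} h) has_vector_derivative h x) (at x)"
    if x: "x \<in> {a<..<b}" "x \<notin> BadU" for x
    unfolding has_vector_derivative_def has_derivative_at_alt
  proof (intro conjI allI impI)
    show "bounded_linear (\<lambda>t. t *\<^sub>R h x)" by (rule bounded_linear_scaleR_left)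
    fix e :: real assume e: "e > 0"
    have M0: "M \<ge> 0" using hb[of x] x by (auto intro: order_trans[OF norm_ge_zero])
    obtain k :: nat where k0: "(2 + 2 * M) / e < real k" using reals_Archimedean2 by blast
    then have k: "(2 + 2 * M) / e < Suc k" by simp
    have ke: "(2 + 2 * M) / Suc k \<le> e" using k e by (simp add: field_simps)
    have "h x \<in> closure D" using D(2) by auto
    moreover have "(0::real) < 1 / Suc k" by simp
    ultimately obtain q where q: "q \<in> D" "dist q (h x) < 1 / Suc k" unfolding closure_approachable
      by blast
    have xA: "x \<in> A q k" using q x unfolding A_def by (auto simp: dist_norm norm_minus_commute)
    have "Bad q k \<subseteq> BadU" unfolding BadU_def using q(1) by blast
    then have "x \<notin> Bad q k" using x by blast
    then have "\<not> (\<forall>\<delta>>0. \<exists>d. 0 < d \<and> d < \<delta> \<and> (1 / Suc k) * d < measure lebesgue (cball x d - A q k))"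
      using xA unfolding Bad_def by blast
    then obtain \<delta>0 where \<delta>0': "\<delta>0 > 0" "\<forall>d. 0 < d \<longrightarrow> d < \<delta>0 \<longrightarrow> \<not> ((1 / Suc k) * d < measure lebesgue (cball x d - A q k))"
      by blast
    then have \<delta>0: "\<delta>0 > 0" "\<And>d. 0 < d \<Longrightarrow> d < \<delta>0 \<Longrightarrow> measure lebesgue (cball x d - A q k) \<le> (1 / Suc k) * d"
      by (auto simp: not_less)
    define \<delta> where "\<delta> = min \<delta>0 (min (x - a) (b - x))"
    have \<delta>: "\<delta> > 0" using \<delta>0 x unfolding \<delta>_def by auto
    show "\<exists>d>0. \<forall>y. norm (y - x) < d \<longrightarrow>
            norm (integral {a..y} h - integral {a..x} h - (y - x) *\<^sub>R h x) \<le> e * norm (y - x)"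
    proof (intro exI[of _ \<delta>] conjI allI impI)
      show "\<delta> > 0" by fact
      fix y assume y: "norm (y - x) < \<delta>"
      define r where "r = \<bar>y - x\<bar>"
      have yab: "y \<in> {a..b}" using y x unfolding \<delta>_def by auto
      have xab: "x \<in> {a..b}" using x by auto
      define I where "I = {min x y..max x y}"
      have Iab: "I \<subseteq> {a..b}" using xab yab unfolding I_def by auto
      have Ic: "I \<subseteq> cball x r" unfolding I_def r_def by (auto simp: dist_real_def)
      define C where "C = cball x r - A q k"
      have Cm: "C \<in> lmeasurable" unfolding C_def using Am by (intro fmeasurable_Diff) auto
      have hI: "h integrable_on I" unfolding I_def using integrable_on_subinterval[OF hint] Iab I_def by auto
      have hI': "(\<lambda>s. h s - h x) integrable_on I" using hI by (intro integrable_diff) (auto simp: I_def)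
      have indI: "indicat_real C integrable_on I" unfolding integrable_on_indicator
        using Cm by (auto simp: I_def intro: fmeasurable_Int_fmeasurable)
      have indI2: "(\<lambda>s. 2 * M * indicat_real C s) integrable_on I" using integrable_cmul[OF indI, of "2 * M"] by simp
      define c where "c = 2 / real (Suc k)"
      have gI: "(\<lambda>s. c + 2 * M * indicat_real C s) integrable_on I"
        by (rule integrable_add[OF _ indI2]) (auto simp: I_def)
      have pw: "norm (h s - h x) \<le> c + 2 * M * indicat_real C s" if s: "s \<in> I" for s
      proof (cases "s \<in> A q k")
        case True
        have "norm (h s - h x) \<le> norm (h s - q) + norm (q - h x)"
          using norm_triangle_ineq[of "h s - q" "q - h x"] by simp
        also have "\<dots> \<le> 1 / Suc k + 1 / Suc k"
          using True q unfolding A_def by (intro add_mono) (auto simp: dist_norm norm_minus_commute less_imp_le)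
        also have "\<dots> = c" unfolding c_def by simp
        finally show ?thesis using M0 by (simp add: indicator_def)
      next
        case False
        then have "s \<in> C" using s Ic unfolding C_def by auto
        moreover have "norm (h s - h x) \<le> 2 * M"
          using hb[of s] hb[of x] s Iab xab norm_triangle_ineq4[of "h s" "h x"] by auto
        moreover have "c \<ge> 0" unfolding c_def by simp
        ultimately show ?thesis by simp
      qed
      have "norm (integral {a..y} h - integral {a..x} h - (y - x) *\<^sub>R h x) = norm (integral I (\<lambda>s. h s - h x))"
        unfolding I_def by (rule integral_split_diff[OF hint xab yab])
      also have "\<dots> \<le> integral I (\<lambda>s. c + 2 * M * indicat_real C s)"
        by (rule integral_norm_bound_integral[OF hI' gI pw])
      also have "\<dots> = c * r + 2 * M * measure lebesgue (C \<inter> I)"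
      proof -
        have "integral I (\<lambda>s. c + 2 * M * indicat_real C s) = integral I (\<lambda>s. c) + integral I (\<lambda>s. 2 * M * indicat_real C s)"
          by (rule integral_add[OF _ indI2]) (auto simp: I_def)
        also have "integral I (\<lambda>s. c) = c * r" unfolding I_def r_def by (simp add: integral_const_real min_def max_def)
        also have "integral I (\<lambda>s. 2 * M * indicat_real C s) = 2 * M * measure lebesgue (C \<inter> I)"
          by (simp add: integral_mult_right integral_indicator Cm fmeasurable_Int_fmeasurable I_def)
        finally show ?thesis .
      qed
      also have "\<dots> \<le> c * r + 2 * M * ((1 / Suc k) * r)"
      proof (cases "r = 0")
        case True
        then have "C \<inter> I \<subseteq> {x}" unfolding I_def r_def by auto
        then have "negligible (C \<inter> I)" by (rule negligible_subset[OF negligible_sing, rotated])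
        then have "measure lebesgue (C \<inter> I) = 0" by (rule negligible_imp_measure0)
        then show ?thesis using True by simp
      next
        case False
        then have r: "0 < r" "r < \<delta>0" using y unfolding r_def \<delta>_def by auto
        have "measure lebesgue (C \<inter> I) \<le> measure lebesgue C"
        proof (rule measure_mono_fmeasurable)
          have "I \<in> sets lebesgue" unfolding I_def using lmeasurable_cbox[of "min x y" "max x y"] by (simp add: cbox_interval fmeasurableD)
          then show "C \<inter> I \<in> sets lebesgue" using Cm by (auto intro: fmeasurableD)
        qed (use Cm in auto)
        also have "\<dots> \<le> (1 / Suc k) * r" unfolding C_def by (rule \<delta>0(2)[OF r])
        finally show ?thesis using M0 by (intro add_left_mono mult_left_mono) auto
      qed
      also have "\<dots> = ((2 + 2 * M) / Suc k) * r" unfolding c_def by (rule aux_arith)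
      also have "\<dots> \<le> e * r" using ke by (intro mult_right_mono) (auto simp: r_def)
      finally show "norm (integral {a..y} h - integral {a..x} h - (y - x) *\<^sub>R h x) \<le> e * norm (y - x)"
        by (simp add: r_def)
    qed
  qed
  show ?thesis
  proof (rule AE_I'[of BadU])
    show "BadU \<in> null_sets lebesgue" using negU by (simp add: negligible_iff_null_sets)
    show "{x \<in> space lebesgue. \<not> (x \<in> {a<..<b} \<longrightarrow> ((\<lambda>s. integral {a..s} h) has_vector_derivative h x) (at x))} \<subseteq> BadU"
      using key by blast
  qed
qed

lemma ac_cong:
  assumes "abs_cont_on a b y" "\<And>s. s \<in> {a..b} \<Longrightarrow> y s = z s"
  shows "abs_cont_on a b z"
proof -
  have eq: "(\<Sum>k<N. norm (z (d k) - z (c k))) = (\<Sum>k<N. norm (y (d k) - y (c k)))" if "adm a b N c d \<delta>" for N c d \<delta>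
  proof (rule sum.cong)
    fix k assume "k \<in> {..<N}"
    then have "a \<le> c k \<and> c k \<le> d k \<and> d k \<le> b" using admD[OF that] by auto
    then show "norm (z (d k) - z (c k)) = norm (y (d k) - y (c k))" using assms(2)[of "c k"] assms(2)[of "d k"] by auto
  qed simp
  show ?thesis using assms(1) unfolding abs_cont_on_alt by (metis eq)
qed

locale csys =
  fixes f :: "real \<Rightarrow> 'n::euclidean_space \<Rightarrow> 'm::euclidean_space \<Rightarrow> 'n" and U :: "'m set" and T L :: real
  assumes U_compact: "compact U"
    and f_cont: "continuous_on ({0..T} \<times> UNIV \<times> U) (\<lambda>(s, x, u). f s x u)"
    and f_lip: "\<And>s u x y. s \<in> {0..T} \<Longrightarrow> u \<in> U \<Longrightarrow> norm (f s x u - f s y u) \<le> L * norm (x - y)"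
    and L_pos: "L > 0"
begin

definition M0 where "M0 = (SOME M. M \<ge> 0 \<and> (\<forall>s\<in>{0..T}. \<forall>v\<in>U. norm (f s 0 v) \<le> M))"

lemma M0: "M0 \<ge> 0" "\<And>s v. s \<in> {0..T} \<Longrightarrow> v \<in> U \<Longrightarrow> norm (f s 0 v) \<le> M0"
proof -
  define K where "K = {0..T} \<times> {0::'n} \<times> U"
  have "compact K" unfolding K_def using U_compact by (intro compact_Times) auto
  moreover have "continuous_on K (\<lambda>(s, x, u). f s x u)"
    by (rule continuous_on_subset[OF f_cont]) (auto simp: K_def)
  ultimately have "compact ((\<lambda>(s, x, u). f s x u) ` K)" by (metis compact_continuous_image)
  then obtain B where B: "\<And>z. z \<in> (\<lambda>(s, x, u). f s x u) ` K \<Longrightarrow> norm z \<le> B"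
    by (meson bounded_iff compact_imp_bounded)
  have "\<exists>M. M \<ge> 0 \<and> (\<forall>s\<in>{0..T}. \<forall>v\<in>U. norm (f s 0 v) \<le> M)"
  proof (intro exI[of _ "max B 0"] conjI ballI)
    fix s v assume "s \<in> {0..T}" "v \<in> U"
    then have "(s, 0, v) \<in> K" by (simp add: K_def)
    then have "norm (f s 0 v) \<le> B" using B[of "f s 0 v"] by force
    then show "norm (f s 0 v) \<le> max B 0" by simp
  qed simp
  then have "M0 \<ge> 0 \<and> (\<forall>s\<in>{0..T}. \<forall>v\<in>U. norm (f s 0 v) \<le> M0)"
    unfolding M0_def by (rule someI_ex)
  then show "M0 \<ge> 0" "\<And>s v. s \<in> {0..T} \<Longrightarrow> v \<in> U \<Longrightarrow> norm (f s 0 v) \<le> M0" by auto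
qed

lemma f_growth:
  assumes "s \<in> {0..T}" "v \<in> U"
  shows "norm (f s x v) \<le> M0 + L * norm x"
proof -
  have "norm (f s x v) \<le> norm (f s 0 v) + norm (f s x v - f s 0 v)"
    using norm_triangle_ineq[of "f s 0 v" "f s x v - f s 0 v"] by simp
  also have "\<dots> \<le> M0 + L * norm (x - 0)" by (intro add_mono M0(2) f_lip assms)
  finally show ?thesis by simp
qed

lemma hh_meas:
  assumes t: "0 \<le> t" and y: "continuous_on {t..T} y" and u: "u \<in> controls U t T"
  shows "(\<lambda>s. f s (y s) (u s)) \<in> borel_measurable (lebesgue_on {t..T})"
proof -
  define Cl where "Cl = {0..T} \<times> (UNIV :: 'n set) \<times> U"
  have clo: "closed Cl" unfolding Cl_def by (intro closed_Times closed_atLeastAtMost closed_UNIV compact_imp_closed[OF U_compact])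
  define G where "G p = (if p \<in> Cl then (\<lambda>(s, x, v). f s x v) p else 0)" for p
  have G: "G \<in> borel_measurable borel" unfolding G_def
    by (rule borel_measurable_continuous_on_if) (use clo f_cont in \<open>auto simp: Cl_def\<close>)
  have Iab: "{t..T} \<in> sets lebesgue" using lmeasurable_cbox[of t T] by (simp add: cbox_interval fmeasurableD)
  have m1: "(\<lambda>s. s) \<in> borel_measurable (lebesgue_on {t..T})"
    by (rule continuous_imp_measurable_on_sets_lebesgue[OF continuous_on_id Iab])
  have m2: "y \<in> borel_measurable (lebesgue_on {t..T})"
    by (rule continuous_imp_measurable_on_sets_lebesgue[OF y Iab])
  have m3: "u \<in> borel_measurable (lebesgue_on {t..T})" using u unfolding controls_def by auto
  have Phi: "(\<lambda>s. (s, y s, u s)) \<in> borel_measurable (lebesgue_on {t..T})"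
    by (intro borel_measurable_Pair m1 m2 m3)
  have "(\<lambda>s. G (s, y s, u s)) \<in> borel_measurable (lebesgue_on {t..T})"
    using measurable_compose[OF Phi G] by (simp add: comp_def)
  moreover have "G (s, y s, u s) = f s (y s) (u s)" if "s \<in> space (lebesgue_on {t..T})" for s
  proof -
    have "s \<in> {t..T}" using that by simp
    then have "(s, y s, u s) \<in> Cl" using t u unfolding Cl_def controls_def by auto
    then show ?thesis unfolding G_def by simp
  qed
  ultimately show ?thesis using measurable_cong by (metis (no_types, lifting))
qed

lemma hh_bound:
  assumes t: "0 \<le> t" and y: "continuous_on {t..T} y" and u: "u \<in> controls U t T"
  obtains B where "B \<ge> 0" "\<And>s. s \<in> {t..T} \<Longrightarrow> norm (f s (y s) (u s)) \<le> B"
proof -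
  have "compact (y ` {t..T})" by (rule compact_continuous_image[OF y compact_Icc])
  then obtain R where R: "\<And>s. s \<in> {t..T} \<Longrightarrow> norm (y s) \<le> R"
    by (meson bounded_iff compact_imp_bounded imageI)
  show ?thesis
  proof (rule that[of "M0 + L * max R 0"])
    show "M0 + L * max R 0 \<ge> 0" using M0(1) L_pos by simp
    fix s assume s: "s \<in> {t..T}"
    then have "s \<in> {0..T}" "u s \<in> U" using t u unfolding controls_def by auto
    then have "norm (f s (y s) (u s)) \<le> M0 + L * norm (y s)" by (rule f_growth)
    also have "\<dots> \<le> M0 + L * max R 0" using R[OF s] L_pos by (intro add_left_mono mult_left_mono) auto
    finally show "norm (f s (y s) (u s)) \<le> M0 + L * max R 0" .
  qed
qed

lemma hh_int:
  assumes t: "0 \<le> t" and y: "continuous_on {t..T} y" and u: "u \<in> controls U t T"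
  shows "(\<lambda>s. f s (y s) (u s)) integrable_on {t..T}"
proof -
  obtain B where B: "\<And>s. s \<in> {t..T} \<Longrightarrow> norm (f s (y s) (u s)) \<le> B" using hh_bound[OF assms] by blast
  have Iab: "{t..T} \<in> sets lebesgue" using lmeasurable_cbox[of t T] by (simp add: cbox_interval fmeasurableD)
  have "(\<lambda>s. f s (y s) (u s)) absolutely_integrable_on {t..T}"
    by (rule measurable_bounded_by_integrable_imp_absolutely_integrable[OF hh_meas[OF assms] Iab integrable_const_ivl B])
  then show ?thesis by (rule set_lebesgue_integral_eq_integral(1))
qed

end

lemma int_diff_bound:
  fixes g :: "real \<Rightarrow> 'a::euclidean_space"
  assumes g: "g integrable_on {t..T}" and s: "s \<in> {t..T}" and s0: "s0 \<in> {t..T}"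
    and B: "B integrable_on {t..T}" and gB: "\<And>r. r \<in> {t..T} \<Longrightarrow> norm (g r) \<le> B r"
  shows "norm (integral {t..s} g - integral {t..s0} g) \<le> integral {min s s0..max s s0} B"
proof -
  have sub: "{min s s0..max s s0} \<subseteq> {t..T}" using s s0 by auto
  have gI: "g integrable_on {min s s0..max s s0}" by (rule integrable_on_subinterval[OF g sub])
  have BI: "B integrable_on {min s s0..max s s0}" by (rule integrable_on_subinterval[OF B sub])
  have bnd: "norm (integral {min s s0..max s s0} g) \<le> integral {min s s0..max s s0} B"
    by (rule integral_norm_bound_integral[OF gI BI]) (meson gB sub subsetD)
  show ?thesis
  proof (cases "s0 \<le> s")
    case True
    have "integral {t..s0} g + integral {s0..s} g = integral {t..s} g"
      by (rule Henstock_Kurzweil_Integration.integral_combine) (use s s0 True integrable_on_subinterval[OF g] in auto)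
    then have "integral {t..s} g - integral {t..s0} g = integral {s0..s} g" by (metis add_diff_cancel_left')
    then have "integral {t..s} g - integral {t..s0} g = integral {min s s0..max s s0} g"
      using True by (simp add: min_def max_def)
    then show ?thesis using bnd by simp
  next
    case False
    have "integral {t..s} g + integral {s..s0} g = integral {t..s0} g"
      by (rule Henstock_Kurzweil_Integration.integral_combine) (use s s0 False integrable_on_subinterval[OF g] in auto)
    then have "integral {t..s} g - integral {t..s0} g = - integral {s..s0} g" by (metis add_diff_cancel_left' minus_diff_eq)
    then have "integral {t..s} g - integral {t..s0} g = - integral {min s s0..max s s0} g"
      using False by (simp add: min_def max_def)
    then show ?thesis using bnd by simp
  qed
qed

lemma exp_integral:
  fixes L :: real
  assumes L: "L > 0"
  shows "integral {min s s0..max s s0} (\<lambda>r. exp (2 * L * \<bar>r - s0\<bar>)) = (exp (2 * L * \<bar>s - s0\<bar>) - 1) / (2 * L)"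
proof (cases "s0 \<le> s")
  case True
  define F where "F r = exp (2 * L * (r - s0)) / (2 * L)" for r
  have d: "(F has_vector_derivative exp (2 * L * (r - s0))) (at r within {s0..s})" for r
  proof -
    have "(F has_real_derivative exp (2 * L * (r - s0))) (at r)"
      unfolding F_def using L by (auto intro!: derivative_eq_intros)
    then show ?thesis by (simp add: has_real_derivative_iff_has_vector_derivative has_vector_derivative_at_within)
  qed
  have "((\<lambda>r. exp (2 * L * (r - s0))) has_integral F s - F s0) {s0..s}"
    by (rule fundamental_theorem_of_calculus[OF True]) (rule d)
  then have "integral {s0..s} (\<lambda>r. exp (2 * L * (r - s0))) = F s - F s0" by (rule integral_unique)
  moreover have "integral {s0..s} (\<lambda>r. exp (2 * L * \<bar>r - s0\<bar>)) = integral {s0..s} (\<lambda>r. exp (2 * L * (r - s0)))"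
    by (rule integral_cong) auto
  ultimately show ?thesis using True L by (simp add: F_def min_def max_def diff_divide_distrib)
next
  case False
  define F where "F r = - exp (2 * L * (s0 - r)) / (2 * L)" for r
  have d: "(F has_vector_derivative exp (2 * L * (s0 - r))) (at r within {s..s0})" for r
  proof -
    have "(F has_real_derivative exp (2 * L * (s0 - r))) (at r)"
      unfolding F_def using L by (auto intro!: derivative_eq_intros)
    then show ?thesis by (simp add: has_real_derivative_iff_has_vector_derivative has_vector_derivative_at_within)
  qed
  have "((\<lambda>r. exp (2 * L * (s0 - r))) has_integral F s0 - F s) {s..s0}"
    by (rule fundamental_theorem_of_calculus) (use False d in auto)
  then have "integral {s..s0} (\<lambda>r. exp (2 * L * (s0 - r))) = F s0 - F s" by (rule integral_unique)
  moreover have "integral {s..s0} (\<lambda>r. exp (2 * L * \<bar>r - s0\<bar>)) = integral {s..s0} (\<lambda>r. exp (2 * L * (s0 - r)))"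
    by (rule integral_cong) auto
  ultimately show ?thesis using False L by (simp add: F_def min_def max_def diff_divide_distrib add_divide_distrib)
qed

lemma geo_sum: "k \<le> m \<Longrightarrow> (\<Sum>j=k..<m. (1/2::real)^j) \<le> 2 * (1/2)^k"
proof -
  have "(\<Sum>j=k..<k+d. (1/2::real)^j) = 2 * (1/2)^k - 2 * (1/2)^(k+d)" for d
    by (induction d) (auto simp: power_add)
  moreover assume "k \<le> m"
  then obtain d where "m = k + d" using le_Suc_ex by blast
  ultimately show ?thesis by simp
qed


context csys
begin

lemma picard_exists:
  assumes t: "0 \<le> t" "t \<le> T" and u: "u \<in> controls U t T" and s0: "s0 \<in> {t..T}"
  shows "\<exists>y. continuous_on {t..T} y \<and>
     (\<forall>s\<in>{t..T}. y s = \<xi> + integral {t..s} (\<lambda>r. f r (y r) (u r)) - integral {t..s0} (\<lambda>r. f r (y r) (u r)))"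
proof -
  define P where "P y s = \<xi> + integral {t..s} (\<lambda>r. f r (y r) (u r)) - integral {t..s0} (\<lambda>r. f r (y r) (u r))" for y s
  have Pcont: "continuous_on {t..T} (P y)" if y: "continuous_on {t..T} y" for y
  proof -
    have "continuous_on {t..T} (\<lambda>s. integral {t..s} (\<lambda>r. f r (y r) (u r)))"
      by (rule indefinite_integral_continuous_1[OF hh_int[OF t(1) y u]])
    then show ?thesis unfolding P_def by (intro continuous_intros)
  qed
  have Pdiff: "norm (P y s - P z s) \<le> integral {min s s0..max s s0} (\<lambda>r. L * norm (y r - z r))"
    if y: "continuous_on {t..T} y" and z: "continuous_on {t..T} z" and s: "s \<in> {t..T}" for y z s
  proof -
    have iy: "(\<lambda>r. f r (y r) (u r)) integrable_on {t..T}" by (rule hh_int[OF t(1) y u])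
    have iz: "(\<lambda>r. f r (z r) (u r)) integrable_on {t..T}" by (rule hh_int[OF t(1) z u])
    have iy': "(\<lambda>r. f r (y r) (u r)) integrable_on {t..x}" if "x \<in> {t..T}" for x
      using integrable_on_subinterval[OF iy] that by auto
    have iz': "(\<lambda>r. f r (z r) (u r)) integrable_on {t..x}" if "x \<in> {t..T}" for x
      using integrable_on_subinterval[OF iz] that by auto
    have "P y s - P z s = integral {t..s} (\<lambda>r. f r (y r) (u r) - f r (z r) (u r)) - integral {t..s0} (\<lambda>r. f r (y r) (u r) - f r (z r) (u r))"
      unfolding P_def using iy'[OF s] iz'[OF s] iy'[OF s0] iz'[OF s0] by (simp add: integral_diff algebra_simps)
    also have "norm \<dots> \<le> integral {min s s0..max s s0} (\<lambda>r. L * norm (y r - z r))"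
    proof (rule int_diff_bound[OF _ s s0])
      show "(\<lambda>r. f r (y r) (u r) - f r (z r) (u r)) integrable_on {t..T}" using iy iz by (rule integrable_diff)
      show "(\<lambda>r. L * norm (y r - z r)) integrable_on {t..T}"
        by (rule integrable_continuous_interval) (intro continuous_intros y z)
      fix r assume r: "r \<in> {t..T}"
      then have "r \<in> {0..T}" "u r \<in> U" using t u unfolding controls_def by auto
      then show "norm (f r (y r) (u r) - f r (z r) (u r)) \<le> L * norm (y r - z r)" by (rule f_lip)
    qed
    finally show ?thesis .
  qed
  define Y where "Y k = (P ^^ k) (\<lambda>s. \<xi>)" for k
  have YS: "Y (Suc k) = P (Y k)" for k unfolding Y_def by simp
  have Ycont: "continuous_on {t..T} (Y k)" for k
    by (induction k) (auto simp: YS Y_def intro: Pcont)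
  have "compact ((\<lambda>s. Y 1 s - Y 0 s) ` {t..T})"
    by (rule compact_continuous_image[OF _ compact_Icc]) (intro continuous_intros Ycont)
  then obtain C0 where C0: "\<And>s. s \<in> {t..T} \<Longrightarrow> norm (Y 1 s - Y 0 s) \<le> C0"
    by (meson bounded_iff compact_imp_bounded imageI)
  define C where "C = max C0 0"
  have C: "C \<ge> 0" "\<And>s. s \<in> {t..T} \<Longrightarrow> norm (Y 1 s - Y 0 s) \<le> C" using C0 unfolding C_def by force+
  have Ybound: "\<forall>s\<in>{t..T}. norm (Y (Suc k) s - Y k s) \<le> C * (1/2)^k * exp (2 * L * \<bar>s - s0\<bar>)" for k
  proof (induction k)
    case 0
    show ?case
    proof
      fix s assume s: "s \<in> {t..T}"
      have "norm (Y (Suc 0) s - Y 0 s) \<le> C" using C(2)[OF s] by simp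
      also have "\<dots> \<le> C * exp (2 * L * \<bar>s - s0\<bar>)" using C(1) L_pos by (simp add: mult_le_cancel_left1)
      finally show "norm (Y (Suc 0) s - Y 0 s) \<le> C * (1/2)^0 * exp (2 * L * \<bar>s - s0\<bar>)" by simp
    qed
  next
    case (Suc k)
    show ?case
    proof
      fix s assume s: "s \<in> {t..T}"
      have sub: "{min s s0..max s s0} \<subseteq> {t..T}" using s s0 by auto
      have "norm (Y (Suc (Suc k)) s - Y (Suc k) s) = norm (P (Y (Suc k)) s - P (Y k) s)" by (simp add: YS)
      also have "\<dots> \<le> integral {min s s0..max s s0} (\<lambda>r. L * norm (Y (Suc k) r - Y k r))"
        by (rule Pdiff[OF Ycont Ycont s])
      also have "\<dots> \<le> integral {min s s0..max s s0} (\<lambda>r. L * (C * (1/2)^k) * exp (2 * L * \<bar>r - s0\<bar>))"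
      proof (rule integral_le)
        show "(\<lambda>r. L * norm (Y (Suc k) r - Y k r)) integrable_on {min s s0..max s s0}"
          by (rule integrable_continuous_interval) (intro continuous_intros continuous_on_subset[OF Ycont sub])
        show "(\<lambda>r. L * (C * (1/2)^k) * exp (2 * L * \<bar>r - s0\<bar>)) integrable_on {min s s0..max s s0}"
          by (rule integrable_continuous_interval) (intro continuous_intros)
        fix r assume "r \<in> {min s s0..max s s0}"
        then have "r \<in> {t..T}" using sub by blast
        then have "norm (Y (Suc k) r - Y k r) \<le> C * (1/2)^k * exp (2 * L * \<bar>r - s0\<bar>)" using Suc.IH by blast
        then show "L * norm (Y (Suc k) r - Y k r) \<le> L * (C * (1/2)^k) * exp (2 * L * \<bar>r - s0\<bar>)"
          using L_pos by (simp add: mult.assoc mult_left_mono)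
      qed
      also have "\<dots> = L * (C * (1/2)^k) * ((exp (2 * L * \<bar>s - s0\<bar>) - 1) / (2 * L))"
        by (simp add: exp_integral[OF L_pos])
      also have "\<dots> \<le> C * (1/2)^(Suc k) * exp (2 * L * \<bar>s - s0\<bar>)"
        using L_pos C(1) by (simp add: field_simps)
      finally show "norm (Y (Suc (Suc k)) s - Y (Suc k) s) \<le> C * (1/2)^(Suc k) * exp (2 * L * \<bar>s - s0\<bar>)" .
    qed
  qed
  define E where "E = exp (2 * L * (T - t))"
  have E: "E \<ge> 1" unfolding E_def using L_pos t by simp
  define CE where "CE = C * E"
  have CE: "CE \<ge> 0" unfolding CE_def using C(1) E by simp
  have Ub: "norm (Y (Suc k) s - Y k s) \<le> CE * (1/2)^k" if s: "s \<in> {t..T}" for k s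
  proof -
    have "\<bar>s - s0\<bar> \<le> T - t" using s s0 by auto
    then have "exp (2 * L * \<bar>s - s0\<bar>) \<le> E" unfolding E_def using L_pos by simp
    then have "C * (1/2)^k * exp (2 * L * \<bar>s - s0\<bar>) \<le> C * (1/2)^k * E" using C(1) by (intro mult_left_mono) auto
    moreover have "norm (Y (Suc k) s - Y k s) \<le> C * (1/2)^k * exp (2 * L * \<bar>s - s0\<bar>)" using Ybound[of k] s by blast
    ultimately have "norm (Y (Suc k) s - Y k s) \<le> C * (1/2)^k * E" by linarith
    also have "\<dots> = CE * (1/2)^k" unfolding CE_def by simp
    finally show ?thesis .
  qed
  have tail: "norm (Y m s - Y k s) \<le> 2 * CE * (1/2)^k" if s: "s \<in> {t..T}" and km: "k \<le> m" for k m s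
  proof -
    have "Y m s - Y k s = (\<Sum>j=k..<m. Y (Suc j) s - Y j s)" using sum_Suc_diff'[OF km, of "\<lambda>j. Y j s"] by simp
    then have "norm (Y m s - Y k s) \<le> (\<Sum>j=k..<m. norm (Y (Suc j) s - Y j s))" by (simp add: norm_sum)
    also have "\<dots> \<le> (\<Sum>j=k..<m. CE * (1/2)^j)" by (rule sum_mono) (rule Ub[OF s])
    also have "\<dots> = CE * (\<Sum>j=k..<m. (1/2)^j)" by (simp add: sum_distrib_left)
    also have "\<dots> \<le> CE * (2 * (1/2)^k)" using CE geo_sum[OF km] by (intro mult_left_mono) auto
    finally show ?thesis by simp
  qed
  have small: "\<exists>N. \<forall>k\<ge>N. 4 * CE * (1/2)^k < e" if e: "e > 0" for e
  proof -
    obtain N where N: "(1/2::real)^N < e / (4 * CE + 1)" using real_arch_pow_inv[of "e / (4 * CE + 1)" "1/2"] e CE by auto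
    show ?thesis
    proof (intro exI allI impI)
      fix k assume "N \<le> k"
      then have "(1/2::real)^k \<le> (1/2)^N" by (intro power_decreasing) auto
      then have "4 * CE * (1/2)^k \<le> (4 * CE + 1) * (1/2)^N" using CE by (intro mult_mono) auto
      also have "\<dots> < (4 * CE + 1) * (e / (4 * CE + 1))" using N CE by (intro mult_strict_left_mono) auto
      also have "\<dots> = e" using CE by simp
      finally show "4 * CE * (1/2)^k < e" .
    qed
  qed
  have conv: "convergent (\<lambda>k. Y k s)" if s: "s \<in> {t..T}" for s
  proof -
    have "Cauchy (\<lambda>k. Y k s)"
      unfolding Cauchy_def
    proof (intro allI impI)
      fix e :: real assume "e > 0"
      then obtain N where N: "\<And>k. k \<ge> N \<Longrightarrow> 4 * CE * (1/2)^k < e" using small by blast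
      show "\<exists>M. \<forall>m\<ge>M. \<forall>n\<ge>M. dist (Y m s) (Y n s) < e"
      proof (intro exI allI impI)
        fix m n assume mn: "N \<le> m" "N \<le> n"
        have "dist (Y m s) (Y n s) \<le> norm (Y m s - Y N s) + norm (Y n s - Y N s)"
          by (metis dist_norm dist_triangle2 dist_commute)
        also have "\<dots> \<le> 2 * CE * (1/2)^N + 2 * CE * (1/2)^N" using tail[OF s mn(1)] tail[OF s mn(2)] by simp
        also have "\<dots> < e" using N[of N] by simp
        finally show "dist (Y m s) (Y n s) < e" .
      qed
    qed
    then show ?thesis by (simp add: Cauchy_convergent_iff)
  qed
  define y where "y s = lim (\<lambda>k. Y k s)" for s
  have ylim: "(\<lambda>k. Y k s) \<longlonglongrightarrow> y s" if "s \<in> {t..T}" for s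
    unfolding y_def using conv[OF that] by (simp add: convergent_LIMSEQ_iff)
  have ybound: "norm (y s - Y k s) \<le> 2 * CE * (1/2)^k" if s: "s \<in> {t..T}" for s k
  proof (rule tendsto_upperbound)
    show "((\<lambda>m. norm (Y m s - Y k s)) \<longlongrightarrow> norm (y s - Y k s)) sequentially"
      by (intro tendsto_intros ylim[OF s])
    show "\<forall>\<^sub>F m in sequentially. norm (Y m s - Y k s) \<le> 2 * CE * (1/2)^k"
      using tail[OF s] by (auto intro: eventually_sequentiallyI)
  qed simp
  have ycont: "continuous_on {t..T} y"
  proof (rule uniform_limit_theorem)
    show "\<forall>\<^sub>F n in sequentially. continuous_on {t..T} (Y n)" using Ycont by simp
    show "uniform_limit {t..T} Y y sequentially"
      unfolding uniform_limit_iff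
    proof (intro allI impI)
      fix e :: real assume "e > 0"
      then obtain N where N: "\<And>k. k \<ge> N \<Longrightarrow> 4 * CE * (1/2)^k < e" using small by blast
      show "\<forall>\<^sub>F n in sequentially. \<forall>x\<in>{t..T}. dist (Y n x) (y x) < e"
      proof (rule eventually_sequentiallyI[of N], intro ballI)
        fix n x assume "N \<le> n" "x \<in> {t..T}"
        have "dist (Y n x) (y x) \<le> 2 * CE * (1/2)^n" using ybound[OF \<open>x \<in> {t..T}\<close>, of n] by (simp add: dist_norm norm_minus_commute)
        also have "\<dots> \<le> 4 * CE * (1/2)^n" using CE by simp
        also have "\<dots> < e" using N[OF \<open>N \<le> n\<close>] .
        finally show "dist (Y n x) (y x) < e" .
      qed
    qed
  qed simp
  have fix_pt: "y s = P y s" if s: "s \<in> {t..T}" for s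
  proof -
    have sub: "{min s s0..max s s0} \<subseteq> {t..T}" using s s0 by auto
    have len: "Henstock_Kurzweil_Integration.content {min s s0..max s s0} \<le> T - t" using s s0 by auto
    have b: "norm (P (Y k) s - P y s) \<le> L * (2 * CE * (T - t)) * (1/2)^k" for k
    proof -
      have "norm (P (Y k) s - P y s) \<le> integral {min s s0..max s s0} (\<lambda>r. L * norm (Y k r - y r))"
        by (rule Pdiff[OF Ycont ycont s])
      also have "\<dots> \<le> integral {min s s0..max s s0} (\<lambda>r. L * (2 * CE * (1/2)^k))"
      proof (rule integral_le)
        show "(\<lambda>r. L * norm (Y k r - y r)) integrable_on {min s s0..max s s0}"
          by (rule integrable_continuous_interval) (intro continuous_intros continuous_on_subset[OF Ycont sub] continuous_on_subset[OF ycont sub])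
        fix r assume "r \<in> {min s s0..max s s0}"
        then have "r \<in> {t..T}" using sub by blast
        then show "L * norm (Y k r - y r) \<le> L * (2 * CE * (1/2)^k)"
          using ybound[of r k] L_pos by (simp add: norm_minus_commute)
      qed (rule integrable_const_ivl)
      also have "\<dots> = Henstock_Kurzweil_Integration.content {min s s0..max s s0} * (L * (2 * CE * (1/2)^k))" by simp
      also have "\<dots> \<le> (T - t) * (L * (2 * CE * (1/2)^k))" using len L_pos CE by (intro mult_right_mono) auto
      finally show ?thesis by (simp add: algebra_simps)
    qed
    have "(\<lambda>k. P (Y k) s) \<longlonglongrightarrow> P y s"
    proof (rule LIM_zero_cancel, rule Lim_null_comparison)
      show "\<forall>\<^sub>F k in sequentially. norm (P (Y k) s - P y s) \<le> L * (2 * CE * (T - t)) * (1/2)^k"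
        using b by simp
      show "(\<lambda>k. L * (2 * CE * (T - t)) * (1/2::real)^k) \<longlonglongrightarrow> 0"
        by (intro tendsto_mult_right_zero LIMSEQ_power_zero) simp
    qed
    moreover have "(\<lambda>k. P (Y k) s) \<longlonglongrightarrow> y s"
      using ylim[OF s] unfolding YS[symmetric] by (rule LIMSEQ_Suc)
    ultimately show ?thesis using LIMSEQ_unique by blast
  qed
  show ?thesis using ycont fix_pt unfolding P_def by blast
qed

end

lemma eps_limit:
  fixes A B Ex :: real
  assumes Ex: "Ex \<ge> 1" and H: "\<And>e. e > 0 \<Longrightarrow> e + A \<le> Ex * (e + B)"
  shows "A \<le> Ex * B"
proof (rule ccontr)
  assume "\<not> A \<le> Ex * B"
  then have gap: "A - Ex * B > 0" by simp
  define e where "e = (A - Ex * B) / (2 * Ex)"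
  have e: "e > 0" unfolding e_def using gap Ex by simp
  have h1: "e + A \<le> Ex * e + Ex * B" using H[OF e] by (simp only: distrib_left)
  have "(Ex - 1) * e = Ex * e - e" by (simp add: left_diff_distrib)
  then have "A - Ex * B \<le> (Ex - 1) * e" using h1 by linarith
  also have "\<dots> < Ex * e" using e by simp
  also have "\<dots> = (A - Ex * B) / 2" unfolding e_def using Ex by simp
  finally show False using gap by (simp add: field_simps)
qed

context csys
begin

lemma sol_exists:
  assumes t: "0 \<le> t" "t \<le> T" and u: "u \<in> controls U t T" and s0: "s0 \<in> {t..T}"
  shows "\<exists>z. is_solution f t T (z t) u z \<and> (\<forall>s. s \<notin> {t..T} \<longrightarrow> z s = z t) \<and> z s0 = \<xi>"
proof -
  obtain y where ycont: "continuous_on {t..T} y"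
    and yeq: "\<And>s. s \<in> {t..T} \<Longrightarrow> y s = \<xi> + integral {t..s} (\<lambda>r. f r (y r) (u r)) - integral {t..s0} (\<lambda>r. f r (y r) (u r))"
    using picard_exists[OF t u s0, of \<xi>] by blast
  define h where "h r = f r (y r) (u r)" for r
  define G where "G s = integral {t..s} h" for s
  have yG: "y s = \<xi> - G s0 + G s" if "s \<in> {t..T}" for s using yeq[OF that] unfolding G_def h_def by simp
  obtain B where B: "B \<ge> 0" "\<And>s. s \<in> {t..T} \<Longrightarrow> norm (h s) \<le> B" using hh_bound[OF t(1) ycont u] unfolding h_def by blast
  have hint: "h integrable_on {t..T}" unfolding h_def by (rule hh_int[OF t(1) ycont u])
  have lip: "norm (y s - y r) \<le> B * \<bar>s - r\<bar>" if s: "s \<in> {t..T}" and r: "r \<in> {t..T}" for s r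
  proof -
    have "y s - y r = (\<xi> - G s0 + G s) - (\<xi> - G s0 + G r)" by (simp only: yG[OF s] yG[OF r])
    also have "\<dots> = G s - G r" by (simp add: algebra_simps)
    finally have "norm (y s - y r) = norm (G s - G r)" by simp
    also have "\<dots> \<le> integral {min s r..max s r} (\<lambda>_. B)"
      unfolding G_def by (rule int_diff_bound[OF hint s r integrable_const_ivl B(2)])
    also have "\<dots> = B * \<bar>s - r\<bar>" by (simp add: min_def max_def abs_if)
    finally show ?thesis .
  qed
  have acy: "abs_cont_on t T y" by (rule ac_lipschitz[OF lip])
  define z where "z s = (if s \<in> {t..T} then y s else y t)" for s
  have zt: "z t = y t" unfolding z_def using t by simp
  have acz: "abs_cont_on t T z" by (rule ac_cong[OF acy]) (simp add: z_def)
  have hm: "h \<in> borel_measurable (lebesgue_on {t..T})" unfolding h_def by (rule hh_meas[OF t(1) ycont u])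
  have Gder: "AE x in lebesgue. x \<in> {t<..<T} \<longrightarrow> (G has_vector_derivative h x) (at x)"
    unfolding G_def by (rule lebesgue_diff[OF hm B(2)])
  have der: "AE x in lebesgue. x \<in> {t<..<T} \<longrightarrow> (z has_vector_derivative f x (z x) (u x)) (at x)"
  proof (rule eventually_mono[OF Gder], intro impI)
    fix x assume H: "x \<in> {t<..<T} \<longrightarrow> (G has_vector_derivative h x) (at x)" and x: "x \<in> {t<..<T}"
    have "((\<lambda>s. (\<xi> - G s0) + G s) has_vector_derivative 0 + h x) (at x)"
      using has_vector_derivative_add[OF has_vector_derivative_const H[rule_format, OF x]] .
    then have "((\<lambda>s. (\<xi> - G s0) + G s) has_vector_derivative h x) (at x)" by simp
    then have "(z has_vector_derivative h x) (at x)"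
    proof (rule has_vector_derivative_transform_within_open)
      show "open {t<..<T}" by simp
      show "x \<in> {t<..<T}" by fact
      fix s assume "s \<in> {t<..<T}"
      then show "\<xi> - G s0 + G s = z s" unfolding z_def using yG[of s] by auto
    qed
    moreover have "h x = f x (z x) (u x)" unfolding h_def z_def using x by auto
    ultimately show "(z has_vector_derivative f x (z x) (u x)) (at x)" by simp
  qed
  have "is_solution f t T (z t) u z" unfolding is_solution_def using acz der by simp
  moreover have "\<forall>s. s \<notin> {t..T} \<longrightarrow> z s = z t" unfolding z_def using zt by (simp add: z_def)
  moreover have "z s0 = \<xi>" unfolding z_def using s0 yG[OF s0] by simp
  ultimately show ?thesis by blast
qed

lemma gronwall:
  assumes t: "0 \<le> t" and u: "u \<in> controls U t T"
    and z1: "is_solution f t T x1 u z1" and z2: "is_solution f t T x2 u z2"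
    and s1: "s1 \<in> {t..T}" and s2: "s2 \<in> {t..T}"
  shows "norm (z1 s2 - z2 s2) \<le> exp (L * \<bar>s2 - s1\<bar>) * norm (z1 s1 - z2 s1)"
proof -
  define w where "w s = z1 s - z2 s" for s
  have acw: "abs_cont_on t T w" unfolding w_def
    using ac_diff z1 z2 unfolding is_solution_def by blast
  define p where "p = min s1 s2"
  define q where "q = max s1 s2"
  have pq: "p \<le> q" "t \<le> p" "q \<le> T" using s1 s2 unfolding p_def q_def by auto
  have acpq: "abs_cont_on p q w" by (rule ac_sub[OF acw pq(2,3)])
  have AE12: "AE s in lebesgue. s \<in> {t<..<T} \<longrightarrow> (z1 has_vector_derivative f s (z1 s) (u s)) (at s) \<and> (z2 has_vector_derivative f s (z2 s) (u s)) (at s)"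
    using AE_conjI[OF z1[unfolded is_solution_def, THEN conjunct2, THEN conjunct2] z2[unfolded is_solution_def, THEN conjunct2, THEN conjunct2]]
    by (rule eventually_mono) blast
  have est: "\<bar>ln (e + w q \<bullet> w q) - ln (e + w p \<bullet> w p)\<bar> \<le> (2 * L) * (q - p)" if e: "e > 0" for e
  proof (rule log_estimate[OF acpq pq(1) e])
    show "AE s in lebesgue. s \<in> {p<..<q} \<longrightarrow> (\<exists>z'. (w has_vector_derivative z') (at s) \<and> \<bar>2 * (w s \<bullet> z')\<bar> \<le> 2 * L * (e + w s \<bullet> w s))"
    proof (rule eventually_mono[OF AE12], intro impI)
      fix s assume H: "s \<in> {t<..<T} \<longrightarrow> (z1 has_vector_derivative f s (z1 s) (u s)) (at s) \<and> (z2 has_vector_derivative f s (z2 s) (u s)) (at s)"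
        and s: "s \<in> {p<..<q}"
      have sT: "s \<in> {t<..<T}" using s pq by auto
      define w' where "w' = f s (z1 s) (u s) - f s (z2 s) (u s)"
      have d: "(w has_vector_derivative w') (at s)" unfolding w_def w'_def
        using H sT by (intro has_vector_derivative_diff) auto
      have s0T: "s \<in> {0..T}" "u s \<in> U" using sT t u unfolding controls_def by auto
      have lw: "norm w' \<le> L * norm (w s)" unfolding w'_def w_def by (rule f_lip[OF s0T])
      have "\<bar>2 * (w s \<bullet> w')\<bar> \<le> 2 * (norm (w s) * norm w')" using Cauchy_Schwarz_ineq2[of "w s" w'] by simp
      also have "\<dots> \<le> 2 * (norm (w s) * (L * norm (w s)))" using lw by (intro mult_left_mono) auto
      also have "\<dots> = 2 * L * (w s \<bullet> w s)" by (simp add: power2_norm_eq_inner[symmetric] power2_eq_square)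
      also have "\<dots> \<le> 2 * L * (e + w s \<bullet> w s)" using L_pos e by simp
      finally show "\<exists>z'. (w has_vector_derivative z') (at s) \<and> \<bar>2 * (w s \<bullet> z')\<bar> \<le> 2 * L * (e + w s \<bullet> w s)"
        using d by blast
    qed
  qed
  define Ex where "Ex = exp (2 * L * \<bar>s2 - s1\<bar>)"
  have Ex: "Ex \<ge> 1" unfolding Ex_def using L_pos by simp
  have qp: "q - p = \<bar>s2 - s1\<bar>" unfolding p_def q_def by auto
  have main: "e + w s2 \<bullet> w s2 \<le> Ex * (e + w s1 \<bullet> w s1)" if e: "e > 0" for e
  proof -
    have pos: "e + w s \<bullet> w s > 0" for s using e by (simp add: add_pos_nonneg)
    have "\<bar>ln (e + w s2 \<bullet> w s2) - ln (e + w s1 \<bullet> w s1)\<bar> \<le> 2 * L * \<bar>s2 - s1\<bar>"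
      using est[OF e] qp unfolding p_def q_def by (cases "s1 \<le> s2") (auto simp: abs_minus_commute)
    then have "ln (e + w s2 \<bullet> w s2) \<le> ln (e + w s1 \<bullet> w s1) + 2 * L * \<bar>s2 - s1\<bar>" by simp
    then have "exp (ln (e + w s2 \<bullet> w s2)) \<le> exp (ln (e + w s1 \<bullet> w s1) + 2 * L * \<bar>s2 - s1\<bar>)" by simp
    then show ?thesis using pos by (simp add: exp_add Ex_def mult.commute)
  qed
  have "w s2 \<bullet> w s2 \<le> Ex * (w s1 \<bullet> w s1)" by (rule eps_limit[OF Ex main])
  then have "(norm (w s2))\<^sup>2 \<le> (exp (L * \<bar>s2 - s1\<bar>) * norm (w s1))\<^sup>2"
    unfolding Ex_def by (simp add: power2_norm_eq_inner power_mult_distrib exp_double[symmetric] mult.assoc)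
  then show ?thesis unfolding w_def by (rule power2_le_imp_le) simp
qed

lemma traj_eq:
  assumes t: "0 \<le> t" "t \<le> T" and u: "u \<in> controls U t T"
    and z: "is_solution f t T x u z" and zo: "\<forall>s. s \<notin> {t..T} \<longrightarrow> z s = x"
  shows "traj f t T x u = z"
  unfolding traj_def
proof (rule the_equality)
  show "is_solution f t T x u z \<and> (\<forall>s. s \<notin> {t..T} \<longrightarrow> z s = x)" using z zo by blast
  fix z' assume H: "is_solution f t T x u z' \<and> (\<forall>s. s \<notin> {t..T} \<longrightarrow> z' s = x)"
  show "z' = z"
  proof
    fix s show "z' s = z s"
    proof (cases "s \<in> {t..T}")
      case True
      have tt: "t \<in> {t..T}" using t by simp
      have "norm (z' s - z s) \<le> exp (L * \<bar>s - t\<bar>) * norm (z' t - z t)"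
        by (rule gronwall[OF t(1) u _ z tt True]) (use H in blast)
      also have "z' t = x" using H unfolding is_solution_def by blast
      also have "z t = x" using z unfolding is_solution_def by blast
      finally show ?thesis by simp
    next
      case False
      then show ?thesis using H zo by simp
    qed
  qed
qed

lemma traj_sol:
  assumes t: "0 \<le> t" "t \<le> T" and u: "u \<in> controls U t T"
  shows "is_solution f t T x u (traj f t T x u)" "traj f t T x u t = x"
proof -
  obtain z where z: "is_solution f t T (z t) u z" "\<forall>s. s \<notin> {t..T} \<longrightarrow> z s = z t" "z t = x"
    using sol_exists[OF t u, of t x] t by auto
  have "traj f t T x u = z" by (rule traj_eq[OF t u]) (use z in auto)
  then show "is_solution f t T x u (traj f t T x u)" "traj f t T x u t = x" using z by auto
qed

lemma traj_bound:
  assumes t: "0 \<le> t" "t \<le> T" and u: "u \<in> controls U t T"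
  shows "(norm (traj f t T x u T))\<^sup>2 \<le> (1 + (norm x)\<^sup>2) * exp ((M0 + 2 * L) * (T - t))"
proof -
  define z where "z = traj f t T x u"
  have zs: "is_solution f t T x u z" and zt: "z t = x" using traj_sol[OF t u] unfolding z_def by auto
  have acz: "abs_cont_on t T z" using zs unfolding is_solution_def by blast
  have est: "\<bar>ln (1 + z T \<bullet> z T) - ln (1 + z t \<bullet> z t)\<bar> \<le> (M0 + 2 * L) * (T - t)"
  proof (rule log_estimate[OF acz t(2)])
    show "AE s in lebesgue. s \<in> {t<..<T} \<longrightarrow> (\<exists>z'. (z has_vector_derivative z') (at s) \<and> \<bar>2 * (z s \<bullet> z')\<bar> \<le> (M0 + 2 * L) * (1 + z s \<bullet> z s))"
    proof (rule eventually_mono[OF zs[unfolded is_solution_def, THEN conjunct2, THEN conjunct2]], intro impI)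
      fix s assume H: "s \<in> {t<..<T} \<longrightarrow> (z has_vector_derivative f s (z s) (u s)) (at s)" and s: "s \<in> {t<..<T}"
      have s0T: "s \<in> {0..T}" "u s \<in> U" using s t u unfolding controls_def by auto
      have g: "norm (f s (z s) (u s)) \<le> M0 + L * norm (z s)" by (rule f_growth[OF s0T])
      have "\<bar>2 * (z s \<bullet> f s (z s) (u s))\<bar> \<le> 2 * (norm (z s) * norm (f s (z s) (u s)))"
        using Cauchy_Schwarz_ineq2[of "z s" "f s (z s) (u s)"] by simp
      also have "\<dots> \<le> 2 * (norm (z s) * (M0 + L * norm (z s)))" using g by (intro mult_left_mono) auto
      also have "\<dots> = M0 * (2 * norm (z s)) + 2 * L * (norm (z s))\<^sup>2" by (simp add: algebra_simps power2_eq_square)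
      also have "\<dots> \<le> M0 * (1 + (norm (z s))\<^sup>2) + 2 * L * (1 + (norm (z s))\<^sup>2)"
      proof (intro add_mono mult_left_mono)
        show "2 * norm (z s) \<le> 1 + (norm (z s))\<^sup>2" using sum_squares_bound[of 1 "norm (z s)"] by (simp add: power2_eq_square)
      qed (use M0(1) L_pos in auto)
      also have "\<dots> = (M0 + 2 * L) * (1 + z s \<bullet> z s)" by (simp add: power2_norm_eq_inner algebra_simps)
      finally show "\<exists>z'. (z has_vector_derivative z') (at s) \<and> \<bar>2 * (z s \<bullet> z')\<bar> \<le> (M0 + 2 * L) * (1 + z s \<bullet> z s)"
        using H s by blast
    qed
  qed simp
  have pos: "1 + z s \<bullet> z s > 0" for s by (simp add: add_pos_nonneg)
  have "ln (1 + z T \<bullet> z T) \<le> ln (1 + z t \<bullet> z t) + (M0 + 2 * L) * (T - t)" using est by simp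
  then have "exp (ln (1 + z T \<bullet> z T)) \<le> exp (ln (1 + z t \<bullet> z t) + (M0 + 2 * L) * (T - t))" by simp
  then have "1 + z T \<bullet> z T \<le> (1 + z t \<bullet> z t) * exp ((M0 + 2 * L) * (T - t))" using pos by (simp add: exp_add)
  then show ?thesis unfolding z_def[symmetric] using zt by (simp add: power2_norm_eq_inner)
qed

end

context csys
begin

lemma value_classZ:
  assumes t: "0 \<le> t" "t \<le> T" and U_ne: "U \<noteq> {}" and g_cont: "continuous_on UNIV g" and g_Z: "classZ g"
  shows "classZ (\<lambda>x. value_fun f U g T t x)"
proof -
  define R where "R x = sqrt ((1 + (norm x)\<^sup>2) * exp ((M0 + 2 * L) * (T - t)))" for x :: 'n
  have reach: "norm (traj f t T x u T) \<le> R x" if u: "u \<in> controls U t T" for x u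
    unfolding R_def by (rule real_le_rsqrt[OF traj_bound[OF t u]])
  have R0: "R x \<ge> 0" for x unfolding R_def by simp
  obtain v0 where v0: "v0 \<in> U" using U_ne by blast
  have cne: "controls U t T \<noteq> {}"
  proof -
    have "(\<lambda>_. v0) \<in> controls U t T" unfolding controls_def using v0 by simp
    then show ?thesis by blast
  qed
  have bdd: "bdd_below ((\<lambda>u. g (traj f t T x u T)) ` controls U t T)" for x
  proof -
    have "compact (cball (0::'n) (R x))" by simp
    moreover have "cball (0::'n) (R x) \<noteq> {}" using R0[of x] by simp
    moreover have "continuous_on (cball 0 (R x)) g" using g_cont by (rule continuous_on_subset) simp
    ultimately obtain m where m: "\<And>y. y \<in> cball 0 (R x) \<Longrightarrow> g m \<le> g y"
      using continuous_attains_inf[of "cball 0 (R x)" g] by blast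
    show ?thesis
    proof (rule bdd_belowI)
      fix z assume "z \<in> (\<lambda>u. g (traj f t T x u T)) ` controls U t T"
      then obtain u where u: "u \<in> controls U t T" "z = g (traj f t T x u T)" by blast
      then show "g m \<le> z" using m[of "traj f t T x u T"] reach[OF u(1), of x] by simp
    qed
  qed
  have vle: "value_fun f U g T t x \<le> g (traj f t T x u T)" if u: "u \<in> controls U t T" for x u
    unfolding value_fun_def by (rule cINF_lower[OF bdd u])
  show ?thesis
    unfolding classZ_def
  proof (intro allI impI)
    fix xb r assume v0: "value_fun f U g T t xb = 0" and r: "(r::real) > 0"
    have ex: "\<exists>u. u \<in> controls U t T \<and> g (traj f t T xb u T) < 1 / Suc k" for k :: nat
    proof -
      have "Inf ((\<lambda>u. g (traj f t T xb u T)) ` controls U t T) < 1 / Suc k"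
        using v0 unfolding value_fun_def by simp
      then obtain z where "z \<in> (\<lambda>u. g (traj f t T xb u T)) ` controls U t T" "z < 1 / Suc k"
        using cInf_lessD[of "(\<lambda>u. g (traj f t T xb u T)) ` controls U t T"] cne by blast
      then show ?thesis by blast
    qed
    then obtain uk where uk: "\<And>k. uk k \<in> controls U t T" "\<And>k. g (traj f t T xb (uk k) T) < 1 / Suc k"
      by metis
    define p where "p k = traj f t T xb (uk k) T" for k
    have pin: "p k \<in> cball 0 (R xb)" for k unfolding p_def using reach[OF uk(1)] by simp
    have "seq_compact (cball (0::'n) (R xb))" by (rule compact_imp_seq_compact) simp
    then obtain l \<sigma> where l: "l \<in> cball 0 (R xb)" and \<sigma>: "strict_mono \<sigma>" and lim: "(p \<circ> \<sigma>) \<longlonglongrightarrow> l"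
      unfolding seq_compact_def using pin by blast
    have glim: "(\<lambda>k. g (p (\<sigma> k))) \<longlonglongrightarrow> g l"
    proof -
      have "isCont g l" using g_cont by (simp add: continuous_on_eq_continuous_at)
      then show ?thesis using isCont_tendsto_compose[OF _ lim] by (simp add: comp_def)
    qed
    have gl0: "g l \<ge> 0"
    proof (rule tendsto_lowerbound[OF glim])
      show "\<forall>\<^sub>F k in sequentially. 0 \<le> g (p (\<sigma> k))"
        using vle[OF uk(1), of xb] v0 unfolding p_def by simp
    qed simp
    have gl1: "g l \<le> 0"
    proof (rule ccontr)
      assume "\<not> g l \<le> 0"
      then have pos: "g l > 0" by simp
      obtain N :: nat where N: "inverse (real (Suc N)) < g l" using reals_Archimedean[OF pos] by blast
      have "g l \<le> inverse (real (Suc N))"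
      proof (rule tendsto_upperbound[OF glim])
        show "\<forall>\<^sub>F k in sequentially. g (p (\<sigma> k)) \<le> inverse (real (Suc N))"
        proof (rule eventually_sequentiallyI[of N])
          fix k assume k: "N \<le> k"
          have "N \<le> \<sigma> k" using seq_suble[OF \<sigma>, of k] k by simp
          then have "1 / real (Suc (\<sigma> k)) \<le> inverse (real (Suc N))"
            by (simp add: inverse_eq_divide frac_le)
          then show "g (p (\<sigma> k)) \<le> inverse (real (Suc N))" using uk(2)[of "\<sigma> k"] unfolding p_def by simp
        qed
      qed simp
      then show False using N by simp
    qed
    have gl: "g l = 0" using gl0 gl1 by simp
    define \<rho> where "\<rho> = r / exp (L * (T - t))"
    have \<rho>: "\<rho> > 0" unfolding \<rho>_def using r by simp
    obtain y' where y': "norm (y' - l) < \<rho> / 2" "g y' < 0"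
      using g_Z gl \<rho> unfolding classZ_def by (meson half_gt_zero)
    obtain k where k: "dist ((p \<circ> \<sigma>) k) l < \<rho> / 2"
      using lim \<rho> unfolding LIMSEQ_def by (meson half_gt_zero order_refl)
    define u where "u = uk (\<sigma> k)"
    have u: "u \<in> controls U t T" unfolding u_def by (rule uk(1))
    have TT: "T \<in> {t..T}" using t by simp
    have tt: "t \<in> {t..T}" using t by simp
    obtain z where z: "is_solution f t T (z t) u z" "\<forall>s. s \<notin> {t..T} \<longrightarrow> z s = z t" "z T = y'"
      using sol_exists[OF t u TT, of y'] by blast
    have trajz: "traj f t T (z t) u = z" by (rule traj_eq[OF t u z(1,2)])
    define y where "y = traj f t T xb u"
    have ys: "is_solution f t T xb u y" "y t = xb" using traj_sol[OF t u] unfolding y_def by auto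
    have pk: "p (\<sigma> k) = y T" unfolding p_def y_def u_def by simp
    have "norm (z t - y t) \<le> exp (L * \<bar>t - T\<bar>) * norm (z T - y T)"
      by (rule gronwall[OF t(1) u z(1) ys(1) TT tt])
    also have "norm (z T - y T) < \<rho>"
    proof -
      have "norm (z T - y T) \<le> norm (y' - l) + norm (l - p (\<sigma> k))"
        using norm_triangle_ineq[of "y' - l" "l - p (\<sigma> k)"] z(3) pk by simp
      also have "\<dots> < \<rho> / 2 + \<rho> / 2" using y'(1) k by (intro add_strict_mono) (auto simp: dist_norm norm_minus_commute)
      finally show ?thesis by simp
    qed
    then have "exp (L * \<bar>t - T\<bar>) * norm (z T - y T) < exp (L * \<bar>t - T\<bar>) * \<rho>" by simp
    also have "exp (L * \<bar>t - T\<bar>) * \<rho> = r" unfolding \<rho>_def using t by simp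
    finally have close: "norm (z t - xb) < r" using ys(2) by simp
    have "value_fun f U g T t (z t) \<le> g (traj f t T (z t) u T)" by (rule vle[OF u])
    also have "\<dots> = g y'" using trajz z(3) by simp
    finally have "value_fun f U g T t (z t) < 0" using y'(2) by simp
    then show "\<exists>x. norm (x - xb) < r \<and> value_fun f U g T t x < 0" using close by blast
  qed
qed

end

theorem lemma4:
  fixes T :: real
    and U :: "(real ^ 'm) set"
    and f :: "real \<Rightarrow> real ^ 'n \<Rightarrow> real ^ 'm \<Rightarrow> real ^ 'n"
    and g :: "real ^ 'n \<Rightarrow> real"
  assumes T_pos: "T > 0"
    and U_compact: "compact U" and U_ne: "U \<noteq> {}"
    and f_cont: "continuous_on ({0..T} \<times> UNIV \<times> U) (\<lambda>(s, x, u). f s x u)"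
    and f_lip: "\<exists>L. \<forall>s\<in>{0..T}. \<forall>u\<in>U. \<forall>x y. norm (f s x u - f s y u) \<le> L * norm (x - y)"
    and f_convex: "\<And>s x. s \<in> {0..T} \<Longrightarrow> convex ((\<lambda>u. f s x u) ` U)"
    and g_cont: "continuous_on UNIV g"
    and g_Z: "classZ g"
  shows "\<forall>t\<in>{0..T}. classZ (\<lambda>x. value_fun f U g T t x)"
proof -
  obtain L0 where L0: "\<forall>s\<in>{0..T}. \<forall>u\<in>U. \<forall>x y. norm (f s x u - f s y u) \<le> L0 * norm (x - y)"
    using f_lip by blast
  define L where "L = \<bar>L0\<bar> + 1"
  interpret csys f U T L
  proof
    show "compact U" by fact
    show "continuous_on ({0..T} \<times> UNIV \<times> U) (\<lambda>(s, x, u). f s x u)" by fact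
    show "L > 0" unfolding L_def by simp
    fix s u x y assume su: "s \<in> {0..T}" "u \<in> U"
    have "norm (f s x u - f s y u) \<le> L0 * norm (x - y)" using L0 su by blast
    also have "\<dots> \<le> L * norm (x - y)" unfolding L_def by (intro mult_right_mono) auto
    finally show "norm (f s x u - f s y u) \<le> L * norm (x - y)" .
  qed
  show ?thesis
  proof
    fix t assume "t \<in> {0..T}"
    then show "classZ (\<lambda>x. value_fun f U g T t x)"
      using value_classZ[of t g] U_ne g_cont g_Z by auto
  qed
qed

end
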